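(* Let $w,w'\in W^{\mathfrak p}$. Every circle of the circle diagram $\overline{C(w')}C(w)$ that has a self-intersection (i.e. contains both arcs of some linked pair of cups or of caps) is colored red.
   Context: Let $n\ge4$, $W$ the Weyl group of type $D_n$ with simple reflections $s_0,\dots,s_{n-1}$ ($s_0,s_1$ both joined to $s_2$, $s_i$ joined to $s_{i+1}$ for $i\ge2$), $W_{\mathfrak p}=\langle s_1,\dots,s_{n-1}\rangle$, $W^{\mathfrak p}$ the minimal length representatives of $W_{\mathfrak p}\backslash W$. For $w\in W^{\mathfrak p}$ let $(\alpha_1,\dots,\alpha_n)=(+,\dots,+)\cdot w$ for the right action on $\{+,-\}^n$ where $s_i$ ($i\ge1$) swaps entries $i,i+1$ and $s_0$ sends $(a_1,a_2,\dots)$ to $(-a_2,-a_1,\dots)$; set $\alpha_{-i}=-\alpha_i$. Label $P=\{-2n,\dots,-1,1,\dots,2n\}$ by $+$ at $j<-n$, $-$ at $j>n$, $\alpha_j$ at $1\le|j|\le n$. The cup diagram $C(w)$ is obtained from the unique non-crossing matching of $P$ by arcs in the lower half plane joining each $+$ to a $-$ on its right, by replacing, for the arcs $(-y_1,y_1),\dots,(-y_{2k},y_{2k})$ crossing $0$ ($y_1<\dots<y_{2k}$), each pair $(-y_{2j-1},y_{2j-1}),(-y_{2j},y_{2j})$ by the two arcs joining $-y_{2j}$ to $y_{2j-1}$ and $-y_{2j-1}$ to $y_{2j}$ (a linked pair of cups, crossing on $x=0$). The cap diagram $\overline{C(w')}$ is the reflection of $C(w')$ in the horizontal axis, with linked pairs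 of caps the reflected linked pairs. The circle diagram $\overline{C(w')}C(w)$ is the union of cups and caps; it is a union of closed curves (circles). A circle meets a linked pair if it contains at least one of its arcs. Points $>n$ are upper outer points and points $<-n$ are lower outer points. Coloring of a circle: black if it passes through no outer point and the number of distinct linked pairs it meets is even; red if it passes through more than one upper outer point, or more than one lower outer point, or the number of distinct linked pairs it meets is odd; green otherwise. *)

theory Defs
  imports Main
begin

text \<open>An element of W is represented by the signed permutation of
  {-n..-1,1..n} (identity elsewhere) it induces.  The word s_i1 ... s_ik
  is sent to the composition s_i1 o ... o s_ik; then the right action on
  sign sequences is (a . w)(j) = a(w(j)), where a is extended oddly
  (a(-j) = -a(j)).\<close>

definition gen :: "nat \<Rightarrow> nat \<Rightarrow> int \<Rightarrow> int" where
  "gen n i = (if i = 0 then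
      (\<lambda>j. if j = 1 then -2 else if j = 2 then -1 else if j = -1 then 2
           else if j = -2 then 1 else j)
    else
      (\<lambda>j. if j = int i then int i + 1 else if j = int i + 1 then int i
           else if j = - int i then - int i - 1 else if j = - int i - 1 then - int i
           else j))"

definition word_eval :: "nat \<Rightarrow> nat list \<Rightarrow> int \<Rightarrow> int" where
  "word_eval n ws = foldr (\<lambda>i f. gen n i \<circ> f) ws id"

definition weylD :: "nat \<Rightarrow> (int \<Rightarrow> int) set" where
  "weylD n = {word_eval n ws | ws. set ws \<subseteq> {0..<n}}"

definition weylD_p :: "nat \<Rightarrow> (int \<Rightarrow> int) set" where
  "weylD_p n = {word_eval n ws | ws. set ws \<subseteq> {1..<n}}"

definition wlen :: "nat \<Rightarrow> (int \<Rightarrow> int) \<Rightarrow> nat" where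
  "wlen n w = (LEAST k. \<exists>ws. set ws \<subseteq> {0..<n} \<and> length ws = k \<and> word_eval n ws = w)"

definition minreps :: "nat \<Rightarrow> (int \<Rightarrow> int) set" where
  "minreps n = {w \<in> weylD n. \<forall>u \<in> weylD_p n. wlen n w \<le> wlen n (u \<circ> w)}"

definition points :: "nat \<Rightarrow> int set" where
  "points n = {- 2 * int n .. 2 * int n} - {0}"

text \<open>True means +, False means -.  alpha_j = sign of w(j) for 1 <= |j| <= n.\<close>
definition label :: "nat \<Rightarrow> (int \<Rightarrow> int) \<Rightarrow> int \<Rightarrow> bool" where
  "label n w j = (if j < - int n then True else if j > int n then False else 0 < w j)"

definition nc_matching :: "int set \<Rightarrow> (int \<Rightarrow> bool) \<Rightarrow> (int \<times> int) set \<Rightarrow> bool" where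
  "nc_matching P lab M \<longleftrightarrow>
     M \<subseteq> {(x, y). x \<in> P \<and> y \<in> P \<and> x < y \<and> lab x \<and> \<not> lab y} \<and>
     (\<forall>p \<in> P. \<exists>!e. e \<in> M \<and> (fst e = p \<or> snd e = p)) \<and>
     (\<forall>(a, b) \<in> M. \<forall>(c, d) \<in> M. \<not> (a < c \<and> c < b \<and> b < d))"

definition matching :: "nat \<Rightarrow> (int \<Rightarrow> int) \<Rightarrow> (int \<times> int) set" where
  "matching n w = (THE M. nc_matching (points n) (label n w) M)"

definition cross_list :: "nat \<Rightarrow> (int \<Rightarrow> int) \<Rightarrow> int list" where
  "cross_list n w = sorted_list_of_set {y. 0 < y \<and> (- y, y) \<in> matching n w}"

definition npairs :: "nat \<Rightarrow> (int \<Rightarrow> int) \<Rightarrow> nat" where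
  "npairs n w = length (cross_list n w) div 2"

text \<open>Arcs (as unordered pairs of endpoints) of the cup diagram C(w).\<close>
definition cup_arcs :: "nat \<Rightarrow> (int \<Rightarrow> int) \<Rightarrow> int set set" where
  "cup_arcs n w =
    (let Y = cross_list n w; k = npairs n w in
     {{a, b} | a b. (a, b) \<in> matching n w \<and> (a, b) \<notin> {(- (Y ! i), Y ! i) | i. i < 2 * k}}
     \<union> {{- (Y ! (2 * j + 1)), Y ! (2 * j)} | j. j < k}
     \<union> {{- (Y ! (2 * j)), Y ! (2 * j + 1)} | j. j < k})"

definition cup_linked :: "nat \<Rightarrow> (int \<Rightarrow> int) \<Rightarrow> int set set set" where
  "cup_linked n w =
    (let Y = cross_list n w in
     {{{- (Y ! (2 * j + 1)), Y ! (2 * j)}, {- (Y ! (2 * j)), Y ! (2 * j + 1)}} | j. j < npairs n w})"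

text \<open>Cups come from C(w), caps (reflected cups) from C(w'); the reflection
  does not change endpoints.  Circles = connected components.\<close>
definition circ_adj :: "nat \<Rightarrow> (int \<Rightarrow> int) \<Rightarrow> (int \<Rightarrow> int) \<Rightarrow> (int \<times> int) set" where
  "circ_adj n w w' = {(x, y). {x, y} \<in> cup_arcs n w \<or> {x, y} \<in> cup_arcs n w'}"

definition circles :: "nat \<Rightarrow> (int \<Rightarrow> int) \<Rightarrow> (int \<Rightarrow> int) \<Rightarrow> int set set" where
  "circles n w w' = {(circ_adj n w w')\<^sup>* `` {p} | p. p \<in> points n}"

text \<open>A circle Z (set of its points) contains an arc iff both endpoints lie in Z.\<close>
definition meets :: "int set \<Rightarrow> int set set \<Rightarrow> bool" where
  "meets Z L \<longleftrightarrow> (\<exists>A \<in> L. A \<subseteq> Z)"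

definition self_intersecting :: "nat \<Rightarrow> (int \<Rightarrow> int) \<Rightarrow> (int \<Rightarrow> int) \<Rightarrow> int set \<Rightarrow> bool" where
  "self_intersecting n w w' Z \<longleftrightarrow>
     (\<exists>L \<in> cup_linked n w \<union> cup_linked n w'. \<forall>A \<in> L. A \<subseteq> Z)"

definition n_linked_met :: "nat \<Rightarrow> (int \<Rightarrow> int) \<Rightarrow> (int \<Rightarrow> int) \<Rightarrow> int set \<Rightarrow> nat" where
  "n_linked_met n w w' Z =
     card {L \<in> cup_linked n w. meets Z L} + card {L \<in> cup_linked n w'. meets Z L}"

definition is_red :: "nat \<Rightarrow> (int \<Rightarrow> int) \<Rightarrow> (int \<Rightarrow> int) \<Rightarrow> int set \<Rightarrow> bool" where
  "is_red n w w' Z \<longleftrightarrow>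
     1 < card {j \<in> Z. int n < j} \<or> 1 < card {j \<in> Z. j < - int n} \<or>
     odd (n_linked_met n w w' Z)"

end

theory Submission
  imports Defs
begin

lemma gen_odd: "gen n i (-j) = - gen n i j"
  unfolding gen_def by auto

lemma gen_nz: "j \<noteq> 0 \<Longrightarrow> gen n i j \<noteq> 0"
  unfolding gen_def by auto

lemma word_odd: "word_eval n ws (-j) = - word_eval n ws j"
  by (induction ws arbitrary: j) (auto simp: word_eval_def gen_odd)

lemma word_nz: "j \<noteq> 0 \<Longrightarrow> word_eval n ws j \<noteq> 0"
  by (induction ws arbitrary: j) (auto simp: word_eval_def gen_nz)


lemma nc_exists:
  fixes P :: "int set"
  assumes "finite P"
    and "\<And>t. card {p\<in>P. p \<le> t \<and> \<not> lab p} \<le> card {p\<in>P. p \<le> t \<and> lab p}"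
    and "card {p\<in>P. lab p} = card {p\<in>P. \<not> lab p}"
  shows "\<exists>M. nc_matching P lab M"
  using assms
proof (induction "card P" arbitrary: P rule: less_induct)
  case less
  show ?case
  proof (cases "P = {}")
    case True
    then show ?thesis by (auto simp: nc_matching_def intro!: exI[of _ "{}"])
  next
    case False
    have ne: "{p\<in>P. \<not> lab p} \<noteq> {}"
    proof
      assume h: "{p\<in>P. \<not> lab p} = {}"
      then have "{p\<in>P. lab p} = P" by auto
      with less.prems(3) h False less.prems(1) show False by auto
    qed
    define y where "y = Min {p\<in>P. \<not> lab p}"
    have fin1: "finite {p\<in>P. \<not> lab p}" using less.prems(1) by auto
    have y: "y \<in> P" "\<not> lab y" using Min_in[OF fin1 ne] y_def by auto
    have ymin: "lab p" if "p \<in> P" "p < y" for p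
      using Min_le[OF fin1, of p] that y_def by force
    have "y \<in> {p\<in>P. p \<le> y \<and> \<not> lab p}" using y by auto
    then have "card {p\<in>P. p \<le> y \<and> \<not> lab p} > 0"
      using less.prems(1) by (auto simp: card_gt_0_iff)
    then have "card {p\<in>P. p \<le> y \<and> lab p} > 0" using less.prems(2)[of y] by linarith
    then obtain x0 where x0: "x0 \<in> P" "x0 \<le> y" "lab x0" by (auto simp: card_gt_0_iff)
    then have x0y: "x0 < y" using y by (cases "x0 = y") auto
    define x where "x = Max {p\<in>P. p < y}"
    have fin2: "finite {p\<in>P. p < y}" using less.prems(1) by auto
    have ne2: "{p\<in>P. p < y} \<noteq> {}" using x0 x0y by auto
    have x: "x \<in> P" "x < y" using Max_in[OF fin2 ne2] x_def by auto
    have xl: "lab x" using ymin x by auto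
    have between: "\<not> (x < p \<and> p < y)" if "p \<in> P" for p
      using Max_ge[OF fin2, of p] that x_def by force
    define P' where "P' = P - {x, y}"
    have finP': "finite P'" using less.prems(1) P'_def by auto
    have cardP': "card P' < card P" unfolding P'_def
      using x y less.prems(1) by (intro psubset_card_mono) auto
    have bal': "card {p\<in>P'. p \<le> t \<and> \<not> lab p} \<le> card {p\<in>P'. p \<le> t \<and> lab p}" for t
    proof (cases "t < x")
      case True
      then have "{p\<in>P'. p \<le> t \<and> \<not> lab p} = {p\<in>P. p \<le> t \<and> \<not> lab p}"
                "{p\<in>P'. p \<le> t \<and> lab p} = {p\<in>P. p \<le> t \<and> lab p}"
        using x y unfolding P'_def by auto
      then show ?thesis using less.prems(2)[of t] by simp
    next
      case False
      show ?thesis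
      proof (cases "t < y")
        case True
        have "{p\<in>P'. p \<le> t \<and> \<not> lab p} = {}"
        proof (safe)
          fix p assume "p \<in> P'" "p \<le> t" "\<not> lab p"
          then show "p \<in> {}" using ymin[of p] True unfolding P'_def by auto
        qed
        then show ?thesis by (metis card.empty le0)
      next
        case False
        have e1: "{p\<in>P. p \<le> t \<and> \<not> lab p} = insert y {p\<in>P'. p \<le> t \<and> \<not> lab p}"
          using x y xl False unfolding P'_def by auto
        have e2: "{p\<in>P. p \<le> t \<and> lab p} = insert x {p\<in>P'. p \<le> t \<and> lab p}"
          using x y xl False unfolding P'_def by auto
        have "y \<notin> {p\<in>P'. p \<le> t \<and> \<not> lab p}" "x \<notin> {p\<in>P'. p \<le> t \<and> lab p}"
          unfolding P'_def by auto
        then show ?thesis using less.prems(2)[of t] e1 e2 finP' by simp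
      qed
    qed
    have tot': "card {p\<in>P'. lab p} = card {p\<in>P'. \<not> lab p}"
    proof -
      have e1: "{p\<in>P. \<not> lab p} = insert y {p\<in>P'. \<not> lab p}"
        using x y xl unfolding P'_def by auto
      have e2: "{p\<in>P. lab p} = insert x {p\<in>P'. lab p}"
        using x y xl unfolding P'_def by auto
      have "y \<notin> {p\<in>P'. \<not> lab p}" "x \<notin> {p\<in>P'. lab p}"
        unfolding P'_def by auto
      then show ?thesis using less.prems(3) e1 e2 finP' by simp
    qed
    obtain M' where M': "nc_matching P' lab M'"
      using less.hyps[OF cardP' finP' bal' tot'] by blast
    define M where "M = insert (x, y) M'"
    have Msub: "M' \<subseteq> {(a, b). a \<in> P' \<and> b \<in> P' \<and> a < b \<and> lab a \<and> \<not> lab b}"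
      using M' unfolding nc_matching_def by blast
    have "nc_matching P lab M"
      unfolding nc_matching_def
    proof (intro conjI)
      show "M \<subseteq> {(a, b). a \<in> P \<and> b \<in> P \<and> a < b \<and> lab a \<and> \<not> lab b}"
        using Msub x y xl unfolding M_def P'_def by auto
      show "\<forall>p\<in>P. \<exists>!e. e \<in> M \<and> (fst e = p \<or> snd e = p)"
      proof
        fix p assume pP: "p \<in> P"
        show "\<exists>!e. e \<in> M \<and> (fst e = p \<or> snd e = p)"
        proof (cases "p = x \<or> p = y")
          case True
          show ?thesis
          proof (rule ex1I[of _ "(x, y)"])
            show "(x, y) \<in> M \<and> (fst (x, y) = p \<or> snd (x, y) = p)" using True M_def by auto
            fix e assume "e \<in> M \<and> (fst e = p \<or> snd e = p)"
            then show "e = (x, y)" using Msub True unfolding M_def P'_def by fastforce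
          qed
        next
          case False
          then have "p \<in> P'" using pP P'_def by auto
          then have "\<exists>!e. e \<in> M' \<and> (fst e = p \<or> snd e = p)"
            using M' unfolding nc_matching_def by blast
          then obtain e where e: "e \<in> M'" "fst e = p \<or> snd e = p"
            and eu: "\<And>e'. e' \<in> M' \<Longrightarrow> fst e' = p \<or> snd e' = p \<Longrightarrow> e' = e"
            by blast
          show ?thesis
          proof (rule ex1I[of _ e])
            show "e \<in> M \<and> (fst e = p \<or> snd e = p)" using e M_def by auto
            fix e' assume "e' \<in> M \<and> (fst e' = p \<or> snd e' = p)"
            then have "e' \<in> M'" "fst e' = p \<or> snd e' = p" using False unfolding M_def by auto
            then show "e' = e" using eu by blast
          qed
        qed
      qed
      show "\<forall>(a, b)\<in>M. \<forall>(c, d)\<in>M. \<not> (a < c \<and> c < b \<and> b < d)"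
      proof (intro ballI, clarify)
        fix a b c d assume ab: "(a, b) \<in> M" and cd: "(c, d) \<in> M" and h: "a < c" "c < b" "b < d"
        show False
        proof (cases "(a, b) = (x, y)")
          case True
          then have "(c, d) \<in> M'" using cd h unfolding M_def by auto
          then show False using Msub between[of c] True h unfolding P'_def by auto
        next
          case F1: False
          then have ab': "(a, b) \<in> M'" using ab M_def by auto
          show False
          proof (cases "(c, d) = (x, y)")
            case True
            then show False using Msub ab' between[of b] h unfolding P'_def by auto
          next
            case False
            then have "(c, d) \<in> M'" using cd M_def by auto
            moreover have "\<forall>(a, b)\<in>M'. \<forall>(c, d)\<in>M'. \<not> (a < c \<and> c < b \<and> b < d)"
              using M' unfolding nc_matching_def by blast
            ultimately show False using ab' h by auto
          qed
        qed
      qed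
    qed
    then show ?thesis by blast
  qed
qed


lemma nc_edge_unique:
  assumes "nc_matching P lab M" "e \<in> M" "e' \<in> M" "p \<in> P"
    "fst e = p \<or> snd e = p" "fst e' = p \<or> snd e' = p"
  shows "e = e'"
proof -
  have "\<exists>!e. e \<in> M \<and> (fst e = p \<or> snd e = p)" using assms(1,4) unfolding nc_matching_def by blast
  then show ?thesis using assms(2,3,5,6) by blast
qed

lemma nc_sub:
  assumes "nc_matching P lab M" "(a, b) \<in> M"
  shows "a \<in> P" "b \<in> P" "a < b" "lab a" "\<not> lab b"
  using assms unfolding nc_matching_def by auto

lemma nc_nocross:
  assumes "nc_matching P lab M" "(a, b) \<in> M" "(c, d) \<in> M"
  shows "\<not> (a < c \<and> c < b \<and> b < d)"
proof -
  have "\<forall>(a, b)\<in>M. \<forall>(c, d)\<in>M. \<not> (a < c \<and> c < b \<and> b < d)"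
    using assms(1) unfolding nc_matching_def by blast
  then show ?thesis using assms(2,3) by auto
qed

lemma nc_cover:
  assumes "nc_matching P lab M" "p \<in> P"
  obtains e where "e \<in> M" "fst e = p \<or> snd e = p"
  using assms unfolding nc_matching_def by blast

lemma nc_first_arc:
  fixes P :: "int set"
  assumes nc: "nc_matching P lab M" and y: "y \<in> P" "\<not> lab y"
    and ymin: "\<And>p. p \<in> P \<Longrightarrow> p < y \<Longrightarrow> lab p"
  shows "\<exists>x. (x, y) \<in> M \<and> x \<in> P \<and> x < y \<and> (\<forall>p\<in>P. \<not> (x < p \<and> p < y))"
proof -
  obtain e where e: "e \<in> M" "fst e = y \<or> snd e = y" using nc_cover[OF nc y(1)] by blast
  obtain a b where ab: "e = (a, b)" by (cases e)
  have "b = y" using e ab nc_sub[OF nc, of a b] y by auto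
  then have ay: "(a, y) \<in> M" using e ab by simp
  note aprops = nc_sub[OF nc ay]
  have "\<not> (a < p \<and> p < y)" if pP: "p \<in> P" for p
  proof
    assume h: "a < p \<and> p < y"
    then have lp: "lab p" using ymin pP by auto
    obtain e' where e': "e' \<in> M" "fst e' = p \<or> snd e' = p" using nc_cover[OF nc pP] by blast
    obtain c d where cd: "e' = (c, d)" by (cases e')
    have cp: "c = p" using e' cd nc_sub[OF nc, of c d] lp by auto
    then have pd: "(p, d) \<in> M" using e' cd by simp
    note dprops = nc_sub[OF nc pd]
    have "d \<noteq> y"
    proof
      assume "d = y"
      then have "(p, d) = (a, y)" using nc_edge_unique[OF nc pd ay y(1)] by auto
      then show False using h by auto
    qed
    moreover have "\<not> d < y" using dprops ymin by auto
    ultimately have "y < d" by auto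
    then show False using nc_nocross[OF nc ay pd] h by auto
  qed
  then show ?thesis using ay aprops by blast
qed

lemma nc_remove:
  assumes nc: "nc_matching P lab M" and xy: "(x, y) \<in> M"
  shows "nc_matching (P - {x, y}) lab (M - {(x, y)})"
  unfolding nc_matching_def
proof (intro conjI)
  note xyp = nc_sub[OF nc xy]
  have notin: "a \<noteq> x \<and> a \<noteq> y \<and> b \<noteq> x \<and> b \<noteq> y" if ab: "(a, b) \<in> M" "(a, b) \<noteq> (x, y)" for a b
  proof -
    have "a \<noteq> x"
    proof assume "a = x" then have "(a, b) = (x, y)" using nc_edge_unique[OF nc ab(1) xy xyp(1)] by simp
      with ab(2) show False .. qed
    moreover have "a \<noteq> y"
    proof assume "a = y" then have "(a, b) = (x, y)" using nc_edge_unique[OF nc ab(1) xy xyp(2)] by simp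
      with ab(2) show False .. qed
    moreover have "b \<noteq> x"
    proof assume "b = x" then have "(a, b) = (x, y)" using nc_edge_unique[OF nc ab(1) xy xyp(1)] by simp
      with ab(2) show False .. qed
    moreover have "b \<noteq> y"
    proof assume "b = y" then have "(a, b) = (x, y)" using nc_edge_unique[OF nc ab(1) xy xyp(2)] by simp
      with ab(2) show False .. qed
    ultimately show ?thesis by blast
  qed
  show "M - {(x, y)} \<subseteq> {(a, b). a \<in> P - {x, y} \<and> b \<in> P - {x, y} \<and> a < b \<and> lab a \<and> \<not> lab b}"
  proof (rule subsetI)
    fix e assume e: "e \<in> M - {(x, y)}"
    obtain a b where eab: "e = (a, b)" by (cases e)
    have ab: "(a, b) \<in> M" "(a, b) \<noteq> (x, y)" using e eab by auto
    from notin[OF ab] nc_sub[OF nc ab(1)]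
    have "a \<in> P - {x, y} \<and> b \<in> P - {x, y} \<and> a < b \<and> lab a \<and> \<not> lab b" by blast
    then show "e \<in> {(a, b). a \<in> P - {x, y} \<and> b \<in> P - {x, y} \<and> a < b \<and> lab a \<and> \<not> lab b}"
      using eab by simp
  qed
  show "\<forall>p\<in>P - {x, y}. \<exists>!e. e \<in> M - {(x, y)} \<and> (fst e = p \<or> snd e = p)"
  proof
    fix p assume p: "p \<in> P - {x, y}"
    obtain e where e: "e \<in> M" "fst e = p \<or> snd e = p" using nc_cover[OF nc] p by blast
    have "e \<noteq> (x, y)" using e p by auto
    show "\<exists>!e. e \<in> M - {(x, y)} \<and> (fst e = p \<or> snd e = p)"
    proof (rule ex1I[of _ e])
      show "e \<in> M - {(x, y)} \<and> (fst e = p \<or> snd e = p)" using e \<open>e \<noteq> (x, y)\<close> by auto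
      fix e' assume "e' \<in> M - {(x, y)} \<and> (fst e' = p \<or> snd e' = p)"
      then have e'1: "e' \<in> M" and e'2: "fst e' = p \<or> snd e' = p" by auto
      have pP: "p \<in> P" using p by blast
      show "e' = e" using nc_edge_unique[OF nc e'1 e(1) pP e'2 e(2)] .
    qed
  qed
  show "\<forall>(a, b)\<in>M - {(x, y)}. \<forall>(c, d)\<in>M - {(x, y)}. \<not> (a < c \<and> c < b \<and> b < d)"
  proof -
    have h: "\<not> (a < c \<and> c < b \<and> b < d)" if "(a, b) \<in> M - {(x, y)}" "(c, d) \<in> M - {(x, y)}" for a b c d
      using nc_nocross[OF nc, of a b c d] that by blast
    show ?thesis using h by fast
  qed
qed

lemma nc_unique:
  fixes P :: "int set"
  assumes "finite P" "nc_matching P lab M1" "nc_matching P lab M2"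
  shows "M1 = M2"
  using assms
proof (induction "card P" arbitrary: P M1 M2 rule: less_induct)
  case less
  show ?case
  proof (cases "P = {}")
    case True
    have "M1 = {}"
    proof (rule equals0I)
      fix e assume "e \<in> M1" then show False using nc_sub(1)[OF less.prems(2), of "fst e" "snd e"] True by simp
    qed
    moreover have "M2 = {}"
    proof (rule equals0I)
      fix e assume "e \<in> M2" then show False using nc_sub(1)[OF less.prems(3), of "fst e" "snd e"] True by simp
    qed
    ultimately show ?thesis by simp
  next
    case False
    then obtain p0 where p0: "p0 \<in> P" by auto
    obtain e0 where e0: "e0 \<in> M1" using nc_cover[OF less.prems(2) p0] by blast
    obtain a0 b0 where "e0 = (a0, b0)" by (cases e0)
    then have b0: "b0 \<in> P" "\<not> lab b0" using nc_sub[OF less.prems(2)] e0 by auto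
    have ne: "{p\<in>P. \<not> lab p} \<noteq> {}" using b0 by auto
    define y where "y = Min {p\<in>P. \<not> lab p}"
    have fin1: "finite {p\<in>P. \<not> lab p}" using less.prems(1) by auto
    have y: "y \<in> P" "\<not> lab y" using Min_in[OF fin1 ne] y_def by auto
    have ymin: "lab p" if "p \<in> P" "p < y" for p
      using Min_le[OF fin1, of p] that y_def by force
    obtain x1 where x1: "(x1, y) \<in> M1" "x1 \<in> P" "x1 < y" "\<forall>p\<in>P. \<not> (x1 < p \<and> p < y)"
      using nc_first_arc[OF less.prems(2) y ymin] by blast
    obtain x2 where x2: "(x2, y) \<in> M2" "x2 \<in> P" "x2 < y" "\<forall>p\<in>P. \<not> (x2 < p \<and> p < y)"
      using nc_first_arc[OF less.prems(3) y ymin] by blast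
    have "x1 = x2"
    proof (rule ccontr)
      assume "x1 \<noteq> x2"
      then have "x1 < x2 \<or> x2 < x1" by linarith
      then show False
      proof
        assume "x1 < x2" then show False using x1(4) x2(2,3) by blast
      next
        assume "x2 < x1" then show False using x2(4) x1(2,3) by blast
      qed
    qed
    then have x2': "(x1, y) \<in> M2" using x2 by simp
    have cardP': "card (P - {x1, y}) < card P"
      using x1 y less.prems(1) by (intro psubset_card_mono) auto
    have finP': "finite (P - {x1, y})" using less.prems(1) by simp
    have eq: "M1 - {(x1, y)} = M2 - {(x1, y)}"
      by (rule less.hyps[OF cardP' finP' nc_remove[OF less.prems(2) x1(1)] nc_remove[OF less.prems(3) x2']])
    have "M1 = insert (x1, y) (M1 - {(x1, y)})" using x1(1) by (simp add: insert_absorb)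
    also have "\<dots> = insert (x1, y) (M2 - {(x1, y)})" using eq by simp
    also have "\<dots> = M2" using x2' by (simp add: insert_absorb)
    finally show ?thesis .
  qed
qed


lemma weyl_odd: "w \<in> weylD n \<Longrightarrow> w (-j) = - w j"
  unfolding weylD_def using word_odd by blast

lemma weyl_nz: "w \<in> weylD n \<Longrightarrow> j \<noteq> 0 \<Longrightarrow> w j \<noteq> 0"
  unfolding weylD_def using word_nz by blast

lemma points_neg: "x \<in> points n \<Longrightarrow> - x \<in> points n"
  unfolding points_def by auto

lemma points_nz: "x \<in> points n \<Longrightarrow> x \<noteq> 0"
  unfolding points_def by auto

lemma points_fin: "finite (points n)"
  unfolding points_def by auto

lemma label_neg:
  assumes "w \<in> weylD n" "x \<in> points n"
  shows "label n w (-x) = (\<not> label n w x)"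
proof -
  have "x \<noteq> 0" using assms(2) points_nz by auto
  then have "w x \<noteq> 0" using weyl_nz[OF assms(1)] by auto
  then show ?thesis unfolding label_def using weyl_odd[OF assms(1), of x] by auto
qed

lemma card_A1: "card {p\<in>points n. p < - int n} = n"
proof -
  have "{p\<in>points n. p < - int n} = {- 2 * int n .. - int n - 1}" unfolding points_def by auto
  then show ?thesis by simp
qed

lemma card_A2: "card {p\<in>points n. int n < p} = n"
proof -
  have "{p\<in>points n. int n < p} = {int n + 1 .. 2 * int n}" unfolding points_def by auto
  then show ?thesis by simp
qed

lemma card_Mid: "card {p\<in>points n. - int n \<le> p \<and> p \<le> int n} = 2 * n"
proof -
  have "{p\<in>points n. - int n \<le> p \<and> p \<le> int n} = {- int n .. int n} - {0}" unfolding points_def by auto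
  then show ?thesis by simp
qed

lemma card_MidLR:
  assumes "w \<in> weylD n"
  shows "card {p\<in>points n. - int n \<le> p \<and> p \<le> int n \<and> label n w p} = n"
    "card {p\<in>points n. - int n \<le> p \<and> p \<le> int n \<and> \<not> label n w p} = n"
proof -
  define L where "L = {p\<in>points n. - int n \<le> p \<and> p \<le> int n \<and> label n w p}"
  define R where "R = {p\<in>points n. - int n \<le> p \<and> p \<le> int n \<and> \<not> label n w p}"
  have img: "uminus ` L = R"
  proof (rule set_eqI, rule iffI)
    fix x assume "x \<in> uminus ` L"
    then obtain y where y: "y \<in> L" "x = - y" by auto
    have yp: "y \<in> points n" "- int n \<le> y" "y \<le> int n" "label n w y" using y(1) L_def by auto
    have "- y \<in> points n" using points_neg[OF yp(1)] .
    moreover have "\<not> label n w (- y)" using label_neg[OF assms yp(1)] yp(4) by simp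
    ultimately show "x \<in> R" using y(2) yp(2,3) R_def by simp
  next
    fix x assume x: "x \<in> R"
    have xp: "x \<in> points n" "- int n \<le> x" "x \<le> int n" "\<not> label n w x" using x R_def by auto
    have "- x \<in> points n" using points_neg[OF xp(1)] .
    moreover have "label n w (- x)" using label_neg[OF assms xp(1)] xp(4) by simp
    ultimately have "- x \<in> L" using xp(2,3) L_def by simp
    then show "x \<in> uminus ` L" by (metis image_eqI minus_minus)
  qed
  have "inj_on uminus L" by (simp add: inj_on_def)
  then have "card (uminus ` L) = card L" by (rule card_image)
  then have cRL: "card R = card L" using img by simp
  have un: "L \<union> R = {p\<in>points n. - int n \<le> p \<and> p \<le> int n}" unfolding L_def R_def by blast
  have int: "L \<inter> R = {}" unfolding L_def R_def by blast
  have fin: "finite L" "finite R" unfolding L_def R_def using points_fin[of n] by simp_all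
  have "card (L \<union> R) = card L + card R" using card_Un_disjoint[OF fin int] .
  then have "card L + card R = 2 * n" using card_Mid[of n] un by simp
  then show "card L = n" "card R = n" using cRL unfolding L_def R_def by auto
qed

lemma plus_set: "{p\<in>points n. label n w p} = {p\<in>points n. p < - int n} \<union> {p\<in>points n. - int n \<le> p \<and> p \<le> int n \<and> label n w p}"
  unfolding label_def by auto

lemma minus_set: "{p\<in>points n. \<not> label n w p} = {p\<in>points n. int n < p} \<union> {p\<in>points n. - int n \<le> p \<and> p \<le> int n \<and> \<not> label n w p}"
  unfolding label_def by auto

lemma card_plus: "w \<in> weylD n \<Longrightarrow> card {p\<in>points n. label n w p} = 2 * n"
  unfolding plus_set using card_A1[of n] card_MidLR[of w n] points_fin[of n]
  by (subst card_Un_disjoint) auto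

lemma card_minus: "w \<in> weylD n \<Longrightarrow> card {p\<in>points n. \<not> label n w p} = 2 * n"
  unfolding minus_set using card_A2[of n] card_MidLR[of w n] points_fin[of n]
  by (subst card_Un_disjoint) auto

lemma ballot:
  assumes w: "w \<in> weylD n"
  shows "card {p\<in>points n. p \<le> t \<and> \<not> label n w p} \<le> card {p\<in>points n. p \<le> t \<and> label n w p}"
proof (cases "t < - int n")
  case True
  have "{p\<in>points n. p \<le> t \<and> \<not> label n w p} = {}" using True unfolding label_def by auto
  then show ?thesis by (metis card.empty le0)
next
  case False
  have A1sub: "{p\<in>points n. p < - int n} \<subseteq> {p\<in>points n. p \<le> t \<and> label n w p}"
    using False unfolding label_def by auto
  have c1: "n \<le> card {p\<in>points n. p \<le> t \<and> label n w p}"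
    using card_mono[OF _ A1sub] card_A1[of n] points_fin[of n] by auto
  show ?thesis
  proof (cases "t \<le> int n")
    case True
    have "{p\<in>points n. p \<le> t \<and> \<not> label n w p} \<subseteq> {p\<in>points n. - int n \<le> p \<and> p \<le> int n \<and> \<not> label n w p}"
      using True unfolding label_def by auto
    then have "card {p\<in>points n. p \<le> t \<and> \<not> label n w p} \<le> n"
      using card_mono[of "{p\<in>points n. - int n \<le> p \<and> p \<le> int n \<and> \<not> label n w p}"] card_MidLR[OF w] points_fin[of n]
      by auto
    then show ?thesis using c1 by linarith
  next
    case False
    have "{p\<in>points n. p \<le> t \<and> label n w p} = {p\<in>points n. label n w p}"
      using False unfolding label_def by auto
    moreover have "card {p\<in>points n. p \<le> t \<and> \<not> label n w p} \<le> card {p\<in>points n. \<not> label n w p}"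
      by (rule card_mono) (use points_fin[of n] in auto)
    ultimately show ?thesis using card_plus[OF w] card_minus[OF w] by simp
  qed
qed

lemma matching_nc:
  assumes w: "w \<in> weylD n"
  shows "nc_matching (points n) (label n w) (matching n w)"
proof -
  obtain M where M: "nc_matching (points n) (label n w) M"
    using nc_exists[OF points_fin ballot[OF w]] card_plus[OF w] card_minus[OF w] by auto
  show ?thesis unfolding matching_def
  proof (rule theI[of _ M])
    show "nc_matching (points n) (label n w) M" by (rule M)
  next
    fix M' assume "nc_matching (points n) (label n w) M'"
    then show "M' = M" using nc_unique[OF points_fin _ M] by blast
  qed
qed


lemma match_sym:
  assumes w: "w \<in> weylD n" and ab: "(a, b) \<in> matching n w"
  shows "(- b, - a) \<in> matching n w"
proof -
  let ?P = "points n" and ?lab = "label n w" and ?M = "matching n w"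
  have nc: "nc_matching ?P ?lab ?M" by (rule matching_nc[OF w])
  define Ms where "Ms = (\<lambda>(a, b). (- b, - a)) ` ?M"
  have memMs: "(x, y) \<in> Ms \<longleftrightarrow> (- y, - x) \<in> ?M" for x y
  proof
    assume "(x, y) \<in> Ms"
    then obtain a b where "(a, b) \<in> ?M" "(x, y) = (- b, - a)" unfolding Ms_def by auto
    then show "(- y, - x) \<in> ?M" by simp
  next
    assume "(- y, - x) \<in> ?M"
    then have "(\<lambda>(a, b). (- b, - a)) (- y, - x) \<in> Ms" unfolding Ms_def by (rule imageI)
    then show "(x, y) \<in> Ms" by simp
  qed
  have ncs: "nc_matching ?P ?lab Ms"
    unfolding nc_matching_def
  proof (intro conjI)
    show "Ms \<subseteq> {(a, b). a \<in> ?P \<and> b \<in> ?P \<and> a < b \<and> ?lab a \<and> \<not> ?lab b}"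
    proof (rule subsetI)
      fix e assume e: "e \<in> Ms"
      obtain x y where exy: "e = (x, y)" by (cases e)
      then have m: "(- y, - x) \<in> ?M" using e memMs by simp
      note s = nc_sub[OF nc m]
      have "x \<in> ?P" using points_neg[OF s(2)] by simp
      moreover have "y \<in> ?P" using points_neg[OF s(1)] by simp
      moreover have "?lab x" using label_neg[OF w s(2)] s(5) by simp
      moreover have "\<not> ?lab y" using label_neg[OF w s(1)] s(4) by simp
      ultimately show "e \<in> {(a, b). a \<in> ?P \<and> b \<in> ?P \<and> a < b \<and> ?lab a \<and> \<not> ?lab b}"
        using s(3) exy by simp
    qed
    show "\<forall>p\<in>?P. \<exists>!e. e \<in> Ms \<and> (fst e = p \<or> snd e = p)"
    proof
      fix p assume p: "p \<in> ?P"
      have mp: "- p \<in> ?P" using points_neg[OF p] .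
      obtain e0 where e0: "e0 \<in> ?M" "fst e0 = - p \<or> snd e0 = - p" using nc_cover[OF nc mp] by blast
      obtain a0 b0 where e0ab: "e0 = (a0, b0)" by (cases e0)
      have in0: "(- b0, - a0) \<in> Ms" using e0 e0ab memMs by simp
      show "\<exists>!e. e \<in> Ms \<and> (fst e = p \<or> snd e = p)"
      proof (rule ex1I[of _ "(- b0, - a0)"])
        show "(- b0, - a0) \<in> Ms \<and> (fst (- b0, - a0) = p \<or> snd (- b0, - a0) = p)"
          using in0 e0(2) e0ab by auto
        fix e assume e: "e \<in> Ms \<and> (fst e = p \<or> snd e = p)"
        obtain x y where exy: "e = (x, y)" by (cases e)
        have m: "(- y, - x) \<in> ?M" using e exy memMs by simp
        have "fst (- y, - x) = - p \<or> snd (- y, - x) = - p" using e exy by auto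
        then have "(- y, - x) = e0" using nc_edge_unique[OF nc m e0(1) mp _ e0(2)] by simp
        then show "e = (- b0, - a0)" using exy e0ab by simp
      qed
    qed
    have h: "\<not> (a < c \<and> c < b \<and> b < d)" if "(a, b) \<in> Ms" "(c, d) \<in> Ms" for a b c d
    proof -
      have "(- b, - a) \<in> ?M" "(- d, - c) \<in> ?M" using that memMs by auto
      from nc_nocross[OF nc this(2) this(1)] show ?thesis by auto
    qed
    show "\<forall>(a, b)\<in>Ms. \<forall>(c, d)\<in>Ms. \<not> (a < c \<and> c < b \<and> b < d)" using h by fast
  qed
  have "Ms = ?M" using nc_unique[OF points_fin ncs nc] .
  moreover have "(- b, - a) \<in> Ms" using ab memMs by simp
  ultimately show ?thesis by simp
qed

lemma cross_sym:
  assumes w: "w \<in> weylD n" and ab: "(a, b) \<in> matching n w" and "a < 0" "0 < b"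
  shows "a = - b"
proof (rule ccontr)
  assume ne: "a \<noteq> - b"
  have nc: "nc_matching (points n) (label n w) (matching n w)" by (rule matching_nc[OF w])
  have ab': "(- b, - a) \<in> matching n w" by (rule match_sym[OF w ab])
  show False
  proof (cases "- b < a")
    case True
    then show False using nc_nocross[OF nc ab' ab] assms(3,4) by auto
  next
    case False
    then have "a < - b" using ne by auto
    then show False using nc_nocross[OF nc ab ab'] assms(3,4) by auto
  qed
qed

definition Ys :: "nat \<Rightarrow> (int \<Rightarrow> int) \<Rightarrow> int set" where
  "Ys n w = {y. 0 < y \<and> (- y, y) \<in> matching n w}"

lemma Ys_sub: "w \<in> weylD n \<Longrightarrow> Ys n w \<subseteq> points n"
  unfolding Ys_def using nc_sub(2)[OF matching_nc] by blast

lemma Ys_fin: "w \<in> weylD n \<Longrightarrow> finite (Ys n w)"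
  using Ys_sub points_fin finite_subset by blast

lemma cross_list_set: "w \<in> weylD n \<Longrightarrow> set (cross_list n w) = Ys n w"
  unfolding cross_list_def Ys_def[symmetric] using Ys_fin by simp

lemma cross_list_len: "w \<in> weylD n \<Longrightarrow> length (cross_list n w) = card (Ys n w)"
  unfolding cross_list_def Ys_def[symmetric] using Ys_fin by simp

lemma Ys_even:
  assumes w: "w \<in> weylD n"
  shows "even (card (Ys n w))"
proof -
  let ?P = "points n" and ?lab = "label n w" and ?M = "matching n w"
  have nc: "nc_matching ?P ?lab ?M" by (rule matching_nc[OF w])
  define Mp where "Mp = {e\<in>?M. 0 < fst e}"
  define Pos where "Pos = {p\<in>?P. 0 < p}"
  have finM: "finite ?M"
  proof -
    have "?M \<subseteq> ?P \<times> ?P" using nc_sub[OF nc] by auto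
    then show ?thesis using points_fin finite_subset by blast
  qed
  then have finMp: "finite Mp" unfolding Mp_def by simp
  have injf: "inj_on fst Mp"
  proof (rule inj_onI)
    fix e1 e2 assume e: "e1 \<in> Mp" "e2 \<in> Mp" "fst e1 = fst e2"
    have "fst e1 \<in> ?P" using e(1) nc_sub(1)[OF nc, of "fst e1" "snd e1"] unfolding Mp_def by simp
    then show "e1 = e2" using nc_edge_unique[OF nc _ _ \<open>fst e1 \<in> ?P\<close>, of e1 e2] e unfolding Mp_def by simp
  qed
  have injs: "inj_on snd Mp"
  proof (rule inj_onI)
    fix e1 e2 assume e: "e1 \<in> Mp" "e2 \<in> Mp" "snd e1 = snd e2"
    have "snd e1 \<in> ?P" using e(1) nc_sub(2)[OF nc, of "fst e1" "snd e1"] unfolding Mp_def by simp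
    then show "e1 = e2" using nc_edge_unique[OF nc _ _ \<open>snd e1 \<in> ?P\<close>, of e1 e2] e unfolding Mp_def by simp
  qed
  have cover: "Pos = (fst ` Mp \<union> snd ` Mp) \<union> Ys n w"
  proof (rule set_eqI, rule iffI)
    fix p assume "p \<in> Pos"
    then have p: "p \<in> ?P" "0 < p" unfolding Pos_def by auto
    obtain e where e: "e \<in> ?M" "fst e = p \<or> snd e = p" using nc_cover[OF nc p(1)] by blast
    obtain a b where eab: "e = (a, b)" by (cases e)
    note s = nc_sub[OF nc e(1)[unfolded eab]]
    show "p \<in> (fst ` Mp \<union> snd ` Mp) \<union> Ys n w"
    proof (cases "a = p")
      case True
      then have "e \<in> Mp" using e(1) eab p(2) unfolding Mp_def by simp
      then show ?thesis using True eab by force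
    next
      case False
      then have bp: "b = p" using e(2) eab by simp
      have "a \<noteq> 0" using points_nz[OF s(1)] .
      show ?thesis
      proof (cases "0 < a")
        case True
        then have "e \<in> Mp" using e(1) eab unfolding Mp_def by simp
        then show ?thesis using bp eab by force
      next
        case False
        then have "a < 0" using \<open>a \<noteq> 0\<close> by simp
        then have "a = - b" using cross_sym[OF w e(1)[unfolded eab]] bp p(2) by simp
        then have "p \<in> Ys n w" using e(1) eab bp p(2) unfolding Ys_def by simp
        then show ?thesis by simp
      qed
    qed
  next
    fix p assume "p \<in> (fst ` Mp \<union> snd ` Mp) \<union> Ys n w"
    then show "p \<in> Pos"
    proof (elim UnE)
      assume "p \<in> fst ` Mp"
      then obtain e where "e \<in> Mp" "p = fst e" by auto
      then show "p \<in> Pos" using nc_sub(1)[OF nc, of "fst e" "snd e"] unfolding Mp_def Pos_def by simp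
    next
      assume "p \<in> snd ` Mp"
      then obtain e where e: "e \<in> Mp" "p = snd e" by auto
      then show "p \<in> Pos" using nc_sub(2,3)[OF nc, of "fst e" "snd e"] unfolding Mp_def Pos_def by simp
    next
      assume "p \<in> Ys n w"
      then show "p \<in> Pos" using Ys_sub[OF w] unfolding Ys_def Pos_def by auto
    qed
  qed
  have d1: "fst ` Mp \<inter> snd ` Mp = {}"
  proof (rule equals0I)
    fix p assume "p \<in> fst ` Mp \<inter> snd ` Mp"
    then obtain e1 e2 where e: "e1 \<in> Mp" "e2 \<in> Mp" "p = fst e1" "p = snd e2" by auto
    have pP: "p \<in> ?P" using e nc_sub(1)[OF nc, of "fst e1" "snd e1"] unfolding Mp_def by simp
    have "e1 = e2" using nc_edge_unique[OF nc _ _ pP, of e1 e2] e unfolding Mp_def by simp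
    have m1: "(fst e1, snd e1) \<in> ?M" using e(1) unfolding Mp_def by simp
    have "fst e1 < snd e1" using nc_sub(3)[OF nc m1] .
    then show False using \<open>e1 = e2\<close> e(3,4) by simp
  qed
  have d2: "(fst ` Mp \<union> snd ` Mp) \<inter> Ys n w = {}"
  proof (rule equals0I)
    fix p assume "p \<in> (fst ` Mp \<union> snd ` Mp) \<inter> Ys n w"
    then obtain e where e: "e \<in> Mp" "p = fst e \<or> p = snd e" and py: "p \<in> Ys n w" by auto
    have m: "(- p, p) \<in> ?M" "0 < p" using py unfolding Ys_def by auto
    have pP: "p \<in> ?P" using nc_sub(2)[OF nc m(1)] .
    have "e = (- p, p)" using nc_edge_unique[OF nc _ m(1) pP, of e] e unfolding Mp_def by auto
    then show False using e m(2) unfolding Mp_def by simp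
  qed
  have "card Pos = card (fst ` Mp \<union> snd ` Mp) + card (Ys n w)"
    using cover card_Un_disjoint[OF _ Ys_fin[OF w] d2] finMp by simp
  also have "card (fst ` Mp \<union> snd ` Mp) = card Mp + card Mp"
    using card_Un_disjoint[OF _ _ d1] finMp card_image[OF injf] card_image[OF injs] by simp
  finally have c1: "card Pos = 2 * card Mp + card (Ys n w)" by simp
  have "Pos = {1 .. 2 * int n}" unfolding Pos_def points_def by auto
  then have "card Pos = 2 * n" by simp
  then have "even (2 * card Mp + card (Ys n w))" using c1 by simp
  then show ?thesis by simp
qed


definition crossing :: "int set \<Rightarrow> bool" where
  "crossing A \<longleftrightarrow> (\<exists>a\<in>A. \<exists>b\<in>A. a < 0 \<and> 0 < b)"

locale cupw =
  fixes n :: nat and w :: "int \<Rightarrow> int"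
  assumes w: "w \<in> weylD n"
begin

abbreviation "Y \<equiv> cross_list n w"
abbreviation "k \<equiv> npairs n w"
abbreviation "M \<equiv> matching n w"
abbreviation "P \<equiv> points n"

definition T2 :: "nat \<Rightarrow> int set" where "T2 j = {- (Y ! (2 * j + 1)), Y ! (2 * j)}"
definition T3 :: "nat \<Rightarrow> int set" where "T3 j = {- (Y ! (2 * j)), Y ! (2 * j + 1)}"
definition Excl :: "(int \<times> int) set" where "Excl = {(- (Y ! i), Y ! i) | i. i < 2 * k}"

lemma nc: "nc_matching P (label n w) M" by (rule matching_nc[OF w])

lemma lenY: "length Y = 2 * k"
  unfolding npairs_def using Ys_even[OF w] cross_list_len[OF w] by simp

lemma Y_props:
  assumes "i < 2 * k"
  shows "0 < Y ! i" "(- (Y ! i), Y ! i) \<in> M" "Y ! i \<in> P" "- (Y ! i) \<in> P"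
proof -
  have "Y ! i \<in> set Y" using assms lenY by simp
  then have "Y ! i \<in> Ys n w" using cross_list_set[OF w] by simp
  then show "0 < Y ! i" "(- (Y ! i), Y ! i) \<in> M" unfolding Ys_def by auto
  then show "Y ! i \<in> P" "- (Y ! i) \<in> P" using nc_sub[OF nc] by auto
qed

lemma Y_inj:
  assumes "i < 2 * k" "j < 2 * k" "Y ! i = Y ! j"
  shows "i = j"
proof -
  have "distinct Y" unfolding cross_list_def by simp
  then show ?thesis using assms lenY nth_eq_iff_index_eq by metis
qed

lemma Y_of_Ys:
  assumes "y \<in> Ys n w"
  shows "\<exists>i<2 * k. y = Y ! i"
proof -
  have "y \<in> set Y" using assms cross_list_set[OF w] by simp
  then show ?thesis using lenY by (metis in_set_conv_nth)
qed

lemma cup_arcs_eq: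
  "cup_arcs n w = {{a, b} | a b. (a, b) \<in> M \<and> (a, b) \<notin> Excl} \<union> T2 ` {..<k} \<union> T3 ` {..<k}"
  unfolding cup_arcs_def Let_def Excl_def T2_def T3_def by auto

lemma cup_linked_eq: "cup_linked n w = (\<lambda>j. {T2 j, T3 j}) ` {..<k}"
  unfolding cup_linked_def Let_def T2_def T3_def by auto

lemma type1_noY:
  assumes ab: "(a, b) \<in> M" "(a, b) \<notin> Excl" and i: "i < 2 * k"
  shows "a \<noteq> Y ! i" "a \<noteq> - (Y ! i)" "b \<noteq> Y ! i" "b \<noteq> - (Y ! i)"
proof -
  note yp = Y_props[OF i]
  have ex: "(- (Y ! i), Y ! i) \<in> Excl" using i unfolding Excl_def by blast
  show "a \<noteq> Y ! i"
  proof
    assume "a = Y ! i"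
    then have "(a, b) = (- (Y ! i), Y ! i)" using nc_edge_unique[OF nc ab(1) yp(2) yp(3)] by simp
    then show False using ab(2) ex by simp
  qed
  show "a \<noteq> - (Y ! i)"
  proof
    assume "a = - (Y ! i)"
    then have "(a, b) = (- (Y ! i), Y ! i)" using nc_edge_unique[OF nc ab(1) yp(2) yp(4)] by simp
    then show False using ab(2) ex by simp
  qed
  show "b \<noteq> Y ! i"
  proof
    assume "b = Y ! i"
    then have "(a, b) = (- (Y ! i), Y ! i)" using nc_edge_unique[OF nc ab(1) yp(2) yp(3)] by simp
    then show False using ab(2) ex by simp
  qed
  show "b \<noteq> - (Y ! i)"
  proof
    assume "b = - (Y ! i)"
    then have "(a, b) = (- (Y ! i), Y ! i)" using nc_edge_unique[OF nc ab(1) yp(2) yp(4)] by simp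
    then show False using ab(2) ex by simp
  qed
qed

lemma type1_nocross:
  assumes ab: "(a, b) \<in> M" "(a, b) \<notin> Excl"
  shows "(0 < a) = (0 < b)"
proof -
  note s = nc_sub[OF nc ab(1)]
  have nz: "a \<noteq> 0" "b \<noteq> 0" using points_nz s(1,2) by auto
  show ?thesis
  proof (rule ccontr)
    assume "(0 < a) \<noteq> (0 < b)"
    then have c: "a < 0" "0 < b" using nz s(3) by auto
    then have "a = - b" using cross_sym[OF w ab(1)] by simp
    then have "b \<in> Ys n w" using ab(1) c unfolding Ys_def by simp
    then obtain i where i: "i < 2 * k" "b = Y ! i" using Y_of_Ys by blast
    then show False using type1_noY(3)[OF ab i(1)] by simp
  qed
qed

lemma type1_sym:
  assumes ab: "(a, b) \<in> M" "(a, b) \<notin> Excl"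
  shows "(- b, - a) \<in> M" "(- b, - a) \<notin> Excl"
proof -
  show "(- b, - a) \<in> M" using match_sym[OF w ab(1)] .
  show "(- b, - a) \<notin> Excl"
  proof
    assume "(- b, - a) \<in> Excl"
    then obtain i where i: "i < 2 * k" "- b = - (Y ! i)" "- a = Y ! i" unfolding Excl_def by blast
    then have "(a, b) = (- (Y ! i), Y ! i)" by simp
    then have "(a, b) \<in> Excl" using i(1) unfolding Excl_def by blast
    then show False using ab(2) by simp
  qed
qed

lemma T_pos_elems:
  assumes j: "j < k"
  shows "2 * j < 2 * k" "2 * j + 1 < 2 * k"
  using j by auto

lemma arcs_sym:
  assumes A: "A \<in> cup_arcs n w"
  shows "uminus ` A \<in> cup_arcs n w"
proof -
  have "A \<in> {{a, b} | a b. (a, b) \<in> M \<and> (a, b) \<notin> Excl} \<or> A \<in> T2 ` {..<k} \<or> A \<in> T3 ` {..<k}"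
    using A cup_arcs_eq by blast
  then show ?thesis
  proof (elim disjE)
    assume "A \<in> {{a, b} | a b. (a, b) \<in> M \<and> (a, b) \<notin> Excl}"
    then obtain a b where ab: "A = {a, b}" "(a, b) \<in> M" "(a, b) \<notin> Excl" by blast
    have e: "uminus ` A = {- b, - a}" using ab(1) by auto
    have "{- b, - a} \<in> {{a, b} | a b. (a, b) \<in> M \<and> (a, b) \<notin> Excl}"
      using type1_sym[OF ab(2,3)] by blast
    then show ?thesis unfolding cup_arcs_eq e by (intro UnI1)
  next
    assume "A \<in> T2 ` {..<k}"
    then obtain j where j: "j < k" "A = T2 j" by blast
    have "uminus ` A = T3 j" using j(2) unfolding T2_def T3_def by auto
    then show ?thesis unfolding cup_arcs_eq using j(1) by blast
  next
    assume "A \<in> T3 ` {..<k}"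
    then obtain j where j: "j < k" "A = T3 j" by blast
    have "uminus ` A = T2 j" using j(2) unfolding T2_def T3_def by auto
    then show ?thesis unfolding cup_arcs_eq using j(1) by blast
  qed
qed

lemma arcs_noinv:
  assumes A: "A \<in> cup_arcs n w" and x: "x \<in> A" "- x \<in> A"
  shows False
proof -
  have "A \<in> {{a, b} | a b. (a, b) \<in> M \<and> (a, b) \<notin> Excl} \<or> A \<in> T2 ` {..<k} \<or> A \<in> T3 ` {..<k}"
    using A cup_arcs_eq by blast
  then show ?thesis
  proof (elim disjE)
    assume "A \<in> {{a, b} | a b. (a, b) \<in> M \<and> (a, b) \<notin> Excl}"
    then obtain a b where ab: "A = {a, b}" "(a, b) \<in> M" "(a, b) \<notin> Excl" by blast
    note s = nc_sub[OF nc ab(2)]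
    have nz: "a \<noteq> 0" "b \<noteq> 0" using points_nz s(1,2) by auto
    have "(0 < a) = (0 < b)" using type1_nocross[OF ab(2,3)] .
    moreover have "x = a \<or> x = b" "- x = a \<or> - x = b" using x ab(1) by auto
    ultimately show False using nz by auto
  next
    assume "A \<in> T2 ` {..<k}"
    then obtain j where j: "j < k" "A = T2 j" by blast
    note p1 = Y_props[OF T_pos_elems(1)[OF j(1)]] and p2 = Y_props[OF T_pos_elems(2)[OF j(1)]]
    have "Y ! (2 * j) = Y ! (2 * j + 1)"
      using x j(2) p1(1) p2(1) unfolding T2_def by auto
    then show False using Y_inj[OF T_pos_elems[OF j(1)]] by simp
  next
    assume "A \<in> T3 ` {..<k}"
    then obtain j where j: "j < k" "A = T3 j" by blast
    note p1 = Y_props[OF T_pos_elems(1)[OF j(1)]] and p2 = Y_props[OF T_pos_elems(2)[OF j(1)]]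
    have "Y ! (2 * j) = Y ! (2 * j + 1)"
      using x j(2) p1(1) p2(1) unfolding T3_def by auto
    then show False using Y_inj[OF T_pos_elems[OF j(1)]] by simp
  qed
qed

lemma arcs_crossing:
  assumes A: "A \<in> cup_arcs n w" and c: "crossing A"
  shows "\<exists>j<k. A = T2 j \<or> A = T3 j"
proof -
  have "A \<in> {{a, b} | a b. (a, b) \<in> M \<and> (a, b) \<notin> Excl} \<or> A \<in> T2 ` {..<k} \<or> A \<in> T3 ` {..<k}"
    using A cup_arcs_eq by blast
  then show ?thesis
  proof (elim disjE)
    assume "A \<in> {{a, b} | a b. (a, b) \<in> M \<and> (a, b) \<notin> Excl}"
    then obtain a b where ab: "A = {a, b}" "(a, b) \<in> M" "(a, b) \<notin> Excl" by blast
    have "(0 < a) = (0 < b)" using type1_nocross[OF ab(2,3)] .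
    then have "\<not> crossing A" unfolding crossing_def ab(1) by auto
    then show ?thesis using c by simp
  next
    assume "A \<in> T2 ` {..<k}" then show ?thesis by blast
  next
    assume "A \<in> T3 ` {..<k}" then show ?thesis by blast
  qed
qed

lemma T_crossing:
  assumes j: "j < k"
  shows "crossing (T2 j)" "crossing (T3 j)"
proof -
  note p1 = Y_props[OF T_pos_elems(1)[OF j]] and p2 = Y_props[OF T_pos_elems(2)[OF j]]
  show "crossing (T2 j)" unfolding crossing_def T2_def using p1(1) p2(1)
    by (intro bexI[of _ "- (Y ! (2 * j + 1))"] bexI[of _ "Y ! (2 * j)"]) auto
  show "crossing (T3 j)" unfolding crossing_def T3_def using p1(1) p2(1)
    by (intro bexI[of _ "- (Y ! (2 * j))"] bexI[of _ "Y ! (2 * j + 1)"]) auto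
qed

lemma T_in_arcs: "j < k \<Longrightarrow> T2 j \<in> cup_arcs n w" "j < k \<Longrightarrow> T3 j \<in> cup_arcs n w"
  using cup_arcs_eq by blast+

lemma T2_neg: "uminus ` T2 j = T3 j" unfolding T2_def T3_def by auto

lemma T_distinct:
  assumes j: "j < k" and j': "j' < k"
  shows "T2 j \<noteq> T3 j'" "T2 j = T2 j' \<Longrightarrow> j = j'" "T3 j = T3 j' \<Longrightarrow> j = j'"
proof -
  note p1 = Y_props[OF T_pos_elems(1)[OF j]] and p2 = Y_props[OF T_pos_elems(2)[OF j]]
  note q1 = Y_props[OF T_pos_elems(1)[OF j']] and q2 = Y_props[OF T_pos_elems(2)[OF j']]
  show "T2 j \<noteq> T3 j'"
  proof
    assume "T2 j = T3 j'"
    then have "Y ! (2 * j) \<in> T3 j'" unfolding T2_def by auto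
    then have "Y ! (2 * j) = Y ! (2 * j' + 1)" unfolding T3_def using p1(1) q1(1) by auto
    then have "2 * j = 2 * j' + 1" using Y_inj[OF T_pos_elems(1)[OF j] T_pos_elems(2)[OF j']] by simp
    then show False by presburger
  qed
  show "j = j'" if "T2 j = T2 j'"
  proof -
    have "Y ! (2 * j) \<in> T2 j'" using that unfolding T2_def by auto
    then have "Y ! (2 * j) = Y ! (2 * j')" unfolding T2_def using p1(1) q2(1) by auto
    then show ?thesis using Y_inj[OF T_pos_elems(1)[OF j] T_pos_elems(1)[OF j']] by simp
  qed
  show "j = j'" if "T3 j = T3 j'"
  proof -
    have "Y ! (2 * j + 1) \<in> T3 j'" using that unfolding T3_def by auto
    then have "Y ! (2 * j + 1) = Y ! (2 * j' + 1)" unfolding T3_def using p2(1) q1(1) by auto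
    then show ?thesis using Y_inj[OF T_pos_elems(2)[OF j] T_pos_elems(2)[OF j']] by simp
  qed
qed

end


definition partner :: "int set set \<Rightarrow> int \<Rightarrow> int" where
  "partner S x = (THE y. {x, y} \<in> S \<and> y \<noteq> x)"

definition pm :: "int set \<Rightarrow> int set set \<Rightarrow> bool" where
  "pm P S \<longleftrightarrow> (\<forall>A\<in>S. \<exists>x y. A = {x, y} \<and> x \<noteq> y \<and> x \<in> P \<and> y \<in> P) \<and>
     (\<forall>p\<in>P. \<exists>A0\<in>S. p \<in> A0 \<and> (\<forall>A\<in>S. p \<in> A \<longrightarrow> A = A0))"

lemma partner_props:
  assumes pm: "pm P S" and p: "p \<in> P"
  shows "{p, partner S p} \<in> S" "partner S p \<noteq> p" "partner S p \<in> P"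
    "\<And>A. A \<in> S \<Longrightarrow> p \<in> A \<Longrightarrow> A = {p, partner S p}"
proof -
  have ex: "\<exists>A0\<in>S. p \<in> A0 \<and> (\<forall>A\<in>S. p \<in> A \<longrightarrow> A = A0)"
    using pm p unfolding pm_def by (elim conjE) (erule bspec)
  then obtain A0 where A0': "A0 \<in> S" "p \<in> A0" "\<forall>A\<in>S. p \<in> A \<longrightarrow> A = A0"
    by (elim bexE conjE) (intro that)
  have A03: "A = A0" if "A \<in> S" "p \<in> A" for A using A0'(3) that by (elim ballE impE) auto
  note A0 = A0'(1,2) A03
  have "\<forall>A\<in>S. \<exists>x y. A = {x, y} \<and> x \<noteq> y \<and> x \<in> P \<and> y \<in> P" using pm unfolding pm_def by (elim conjE)
  then have "\<exists>x y. A0 = {x, y} \<and> x \<noteq> y \<and> x \<in> P \<and> y \<in> P" using A0(1) by (rule bspec)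
  then obtain x y where xy: "A0 = {x, y}" "x \<noteq> y" "x \<in> P" "y \<in> P" by (elim exE conjE) (intro that)
  define q where "q = (if p = x then y else x)"
  have pxy: "p = x \<or> p = y" using A0(2) xy(1) by simp
  have A0q: "A0 = {p, q}"
  proof (cases "p = x")
    case True then show ?thesis using xy(1) q_def by simp
  next
    case False then have "p = y" "q = x" using pxy q_def by simp_all
    then show ?thesis using xy(1) by (simp add: insert_commute)
  qed
  have qp: "q \<noteq> p" using xy(2) pxy q_def by (cases "p = x") simp_all
  have qP: "q \<in> P" using xy q_def by auto
  have "partner S p = q" unfolding partner_def
  proof (rule the_equality)
    show "{p, q} \<in> S \<and> q \<noteq> p" using A0(1) A0q qp by simp
    fix q' assume h: "{p, q'} \<in> S \<and> q' \<noteq> p"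
    then have "{p, q'} = A0" by (intro A0(3)) auto
    then have "q' \<in> {p, q}" using A0q by blast
    then show "q' = q" using h by blast
  qed
  then show "{p, partner S p} \<in> S" "partner S p \<noteq> p" "partner S p \<in> P"
    using A0(1) A0q qp qP by simp_all
  fix A assume "A \<in> S" "p \<in> A"
  then have "A = A0" by (rule A0(3))
  then show "A = {p, partner S p}" using A0q \<open>partner S p = q\<close> by simp
qed

lemma partner_eq:
  assumes pm: "pm P S" and p: "p \<in> P" and "{p, q} \<in> S" "q \<noteq> p"
  shows "partner S p = q"
proof -
  have "{p, q} = {p, partner S p}" by (rule partner_props(4)[OF pm p assms(3)]) simp
  then have "q \<in> {p, partner S p}" by blast
  then show ?thesis using assms(4) by blast
qed

lemma partner_inv:
  assumes pm: "pm P S" and p: "p \<in> P"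
  shows "partner S (partner S p) = p"
proof -
  note pp = partner_props[OF pm p]
  have "{partner S p, p} \<in> S" using pp(1) by (simp add: insert_commute)
  then show ?thesis using pp(2) by (intro partner_eq[OF pm pp(3)]) auto
qed

lemma partner_neg:
  assumes pm: "pm P S" and p: "p \<in> P" and Pn: "\<And>x. x \<in> P \<Longrightarrow> - x \<in> P"
    and Sn: "\<And>A. A \<in> S \<Longrightarrow> uminus ` A \<in> S"
  shows "partner S (- p) = - partner S p"
proof -
  note pp = partner_props[OF pm p]
  have "uminus ` {p, partner S p} \<in> S" using Sn[OF pp(1)] .
  then have "{- p, - partner S p} \<in> S" by simp
  then show ?thesis using pp(2) by (intro partner_eq[OF pm Pn[OF p]]) auto
qed

context cupw
begin

definition cpt :: "int \<Rightarrow> bool" where "cpt p \<longleftrightarrow> (\<exists>i<2 * k. p = Y ! i \<or> p = - (Y ! i))"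

lemma T_cpt:
  assumes j: "j < k"
  shows "x \<in> T2 j \<Longrightarrow> cpt x" "x \<in> T3 j \<Longrightarrow> cpt x"
proof -
  note t = T_pos_elems[OF j]
  show "x \<in> T2 j \<Longrightarrow> cpt x"
  proof -
    assume "x \<in> T2 j"
    then have "x = - (Y ! (2 * j + 1)) \<or> x = Y ! (2 * j)" unfolding T2_def by simp
    then show "cpt x" unfolding cpt_def using t by blast
  qed
  show "x \<in> T3 j \<Longrightarrow> cpt x"
  proof -
    assume "x \<in> T3 j"
    then have "x = - (Y ! (2 * j)) \<or> x = Y ! (2 * j + 1)" unfolding T3_def by simp
    then show "cpt x" unfolding cpt_def using t by blast
  qed
qed

lemma arc_of_Yi:
  assumes i: "i < 2 * k" and A: "A \<in> cup_arcs n w" and yA: "Y ! i \<in> A"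
  shows "A = (if even i then T2 (i div 2) else T3 (i div 2))"
proof -
  note yp = Y_props[OF i]
  have "A \<in> {{a, b} | a b. (a, b) \<in> M \<and> (a, b) \<notin> Excl} \<or> A \<in> T2 ` {..<k} \<or> A \<in> T3 ` {..<k}"
    using A cup_arcs_eq by blast
  then show ?thesis
  proof (elim disjE)
    assume "A \<in> {{a, b} | a b. (a, b) \<in> M \<and> (a, b) \<notin> Excl}"
    then obtain a b where ab: "A = {a, b}" "(a, b) \<in> M" "(a, b) \<notin> Excl" by blast
    then show ?thesis using type1_noY[OF ab(2,3) i] yA by auto
  next
    assume "A \<in> T2 ` {..<k}"
    then obtain j where j: "j < k" "A = T2 j" by blast
    note q1 = Y_props[OF T_pos_elems(1)[OF j(1)]] and q2 = Y_props[OF T_pos_elems(2)[OF j(1)]]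
    have "Y ! i = Y ! (2 * j)" using yA j(2) yp(1) q2(1) unfolding T2_def by auto
    then have "i = 2 * j" using Y_inj[OF i T_pos_elems(1)[OF j(1)]] by simp
    then show ?thesis using j(2) by simp
  next
    assume "A \<in> T3 ` {..<k}"
    then obtain j where j: "j < k" "A = T3 j" by blast
    note q1 = Y_props[OF T_pos_elems(1)[OF j(1)]] and q2 = Y_props[OF T_pos_elems(2)[OF j(1)]]
    have "Y ! i = Y ! (2 * j + 1)" using yA j(2) yp(1) q1(1) unfolding T3_def by auto
    then have "i = 2 * j + 1" using Y_inj[OF i T_pos_elems(2)[OF j(1)]] by simp
    then show ?thesis using j(2) by simp
  qed
qed

lemma arc_of_mYi:
  assumes i: "i < 2 * k" and A: "A \<in> cup_arcs n w" and yA: "- (Y ! i) \<in> A"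
  shows "A = (if even i then T3 (i div 2) else T2 (i div 2))"
proof -
  note yp = Y_props[OF i]
  have "A \<in> {{a, b} | a b. (a, b) \<in> M \<and> (a, b) \<notin> Excl} \<or> A \<in> T2 ` {..<k} \<or> A \<in> T3 ` {..<k}"
    using A cup_arcs_eq by blast
  then show ?thesis
  proof (elim disjE)
    assume "A \<in> {{a, b} | a b. (a, b) \<in> M \<and> (a, b) \<notin> Excl}"
    then obtain a b where ab: "A = {a, b}" "(a, b) \<in> M" "(a, b) \<notin> Excl" by blast
    then show ?thesis using type1_noY[OF ab(2,3) i] yA by auto
  next
    assume "A \<in> T2 ` {..<k}"
    then obtain j where j: "j < k" "A = T2 j" by blast
    note q1 = Y_props[OF T_pos_elems(1)[OF j(1)]] and q2 = Y_props[OF T_pos_elems(2)[OF j(1)]]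
    have "Y ! i = Y ! (2 * j + 1)" using yA j(2) yp(1) q1(1) unfolding T2_def by auto
    then have "i = 2 * j + 1" using Y_inj[OF i T_pos_elems(2)[OF j(1)]] by simp
    then show ?thesis using j(2) by simp
  next
    assume "A \<in> T3 ` {..<k}"
    then obtain j where j: "j < k" "A = T3 j" by blast
    note q1 = Y_props[OF T_pos_elems(1)[OF j(1)]] and q2 = Y_props[OF T_pos_elems(2)[OF j(1)]]
    have "Y ! i = Y ! (2 * j)" using yA j(2) yp(1) q2(1) unfolding T3_def by auto
    then have "i = 2 * j" using Y_inj[OF i T_pos_elems(1)[OF j(1)]] by simp
    then show ?thesis using j(2) by simp
  qed
qed

lemma arcs_pm: "pm P (cup_arcs n w)"
  unfolding pm_def
proof (intro conjI ballI)
  fix A assume A: "A \<in> cup_arcs n w"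
  have "A \<in> {{a, b} | a b. (a, b) \<in> M \<and> (a, b) \<notin> Excl} \<or> A \<in> T2 ` {..<k} \<or> A \<in> T3 ` {..<k}"
    using A cup_arcs_eq by blast
  then show "\<exists>x y. A = {x, y} \<and> x \<noteq> y \<and> x \<in> P \<and> y \<in> P"
  proof (elim disjE)
    assume "A \<in> {{a, b} | a b. (a, b) \<in> M \<and> (a, b) \<notin> Excl}"
    then obtain a b where ab: "A = {a, b}" "(a, b) \<in> M" "(a, b) \<notin> Excl" by blast
    note s = nc_sub[OF nc ab(2)]
    show ?thesis using ab(1) s(1,2,3) by (intro exI[of _ a] exI[of _ b]) simp
  next
    assume "A \<in> T2 ` {..<k}"
    then obtain j where j: "j < k" "A = T2 j" by blast
    note q1 = Y_props[OF T_pos_elems(1)[OF j(1)]] and q2 = Y_props[OF T_pos_elems(2)[OF j(1)]]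
    show ?thesis using j(2) q1 q2 unfolding T2_def
      by (intro exI[of _ "- (Y ! (2 * j + 1))"] exI[of _ "Y ! (2 * j)"]) simp
  next
    assume "A \<in> T3 ` {..<k}"
    then obtain j where j: "j < k" "A = T3 j" by blast
    note q1 = Y_props[OF T_pos_elems(1)[OF j(1)]] and q2 = Y_props[OF T_pos_elems(2)[OF j(1)]]
    show ?thesis using j(2) q1 q2 unfolding T3_def
      by (intro exI[of _ "- (Y ! (2 * j))"] exI[of _ "Y ! (2 * j + 1)"]) simp
  qed
next
  fix p assume p: "p \<in> P"
  show "\<exists>A0\<in>cup_arcs n w. p \<in> A0 \<and> (\<forall>A\<in>cup_arcs n w. p \<in> A \<longrightarrow> A = A0)"
  proof (cases "cpt p")
    case True
    then obtain i where i: "i < 2 * k" "p = Y ! i \<or> p = - (Y ! i)" unfolding cpt_def by blast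
    have hj: "i div 2 < k" using i(1) by simp
    have ev: "even i \<Longrightarrow> 2 * (i div 2) = i" "odd i \<Longrightarrow> 2 * (i div 2) + 1 = i" by auto
    from i(2) show ?thesis
    proof
      assume pi: "p = Y ! i"
      define A0 where "A0 = (if even i then T2 (i div 2) else T3 (i div 2))"
      have "A0 \<in> cup_arcs n w" using T_in_arcs[OF hj] A0_def by simp
      moreover have "p \<in> A0" using pi ev unfolding A0_def T2_def T3_def by (cases "even i") auto
      moreover have "\<forall>A\<in>cup_arcs n w. p \<in> A \<longrightarrow> A = A0"
      proof (intro ballI impI)
        fix A assume "A \<in> cup_arcs n w" "p \<in> A"
        then show "A = A0" unfolding A0_def using arc_of_Yi[OF i(1), of A] pi by blast
      qed
      ultimately show ?thesis by blast
    next
      assume pi: "p = - (Y ! i)"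
      define A0 where "A0 = (if even i then T3 (i div 2) else T2 (i div 2))"
      have "A0 \<in> cup_arcs n w" using T_in_arcs[OF hj] A0_def by simp
      moreover have "p \<in> A0" using pi ev unfolding A0_def T2_def T3_def by (cases "even i") auto
      moreover have "\<forall>A\<in>cup_arcs n w. p \<in> A \<longrightarrow> A = A0"
      proof (intro ballI impI)
        fix A assume "A \<in> cup_arcs n w" "p \<in> A"
        then show "A = A0" unfolding A0_def using arc_of_mYi[OF i(1), of A] pi by blast
      qed
      ultimately show ?thesis by blast
    qed
  next
    case False
    obtain e where e: "e \<in> M" "fst e = p \<or> snd e = p" using nc_cover[OF nc p] by blast
    obtain a b where eab: "e = (a, b)" by (cases e)
    have ab: "(a, b) \<in> M" using e eab by simp
    have pab: "p = a \<or> p = b" using e eab by auto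
    have nex: "(a, b) \<notin> Excl"
    proof
      assume "(a, b) \<in> Excl"
      then obtain i where i: "i < 2 * k" "(a, b) = (- (Y ! i), Y ! i)" unfolding Excl_def by blast
      then have "p = Y ! i \<or> p = - (Y ! i)" using pab by auto
      then have "cpt p" unfolding cpt_def using i(1) by blast
      then show False using False by simp
    qed
    have "{a, b} \<in> {{a, b} | a b. (a, b) \<in> M \<and> (a, b) \<notin> Excl}" using ab nex by blast
    then have inA: "{a, b} \<in> cup_arcs n w" unfolding cup_arcs_eq by (intro UnI1)
    have "\<forall>A\<in>cup_arcs n w. p \<in> A \<longrightarrow> A = {a, b}"
    proof (intro ballI impI)
      fix A assume A: "A \<in> cup_arcs n w" and pA: "p \<in> A"
      have "A \<in> {{a, b} | a b. (a, b) \<in> M \<and> (a, b) \<notin> Excl} \<or> A \<in> T2 ` {..<k} \<or> A \<in> T3 ` {..<k}"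
        using A cup_arcs_eq by blast
      then show "A = {a, b}"
      proof (elim disjE)
        assume "A \<in> {{a, b} | a b. (a, b) \<in> M \<and> (a, b) \<notin> Excl}"
        then obtain a' b' where ab': "A = {a', b'}" "(a', b') \<in> M" by blast
        have "fst (a', b') = p \<or> snd (a', b') = p" using pA ab'(1) by auto
        then have "(a', b') = e" by (rule nc_edge_unique[OF nc ab'(2) e(1) p _ e(2)])
        then show ?thesis using ab'(1) eab by simp
      next
        assume "A \<in> T2 ` {..<k}"
        then obtain j where j: "j < k" "A = T2 j" by blast
        then have "cpt p" using T_cpt(1)[OF j(1)] pA by simp
        then show ?thesis using False by simp
      next
        assume "A \<in> T3 ` {..<k}"
        then obtain j where j: "j < k" "A = T3 j" by blast
        then have "cpt p" using T_cpt(2)[OF j(1)] pA by simp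
        then show ?thesis using False by simp
      qed
    qed
    then have all: "\<forall>A\<in>cup_arcs n w. p \<in> A \<longrightarrow> A = {a, b}" .
    have "p \<in> {a, b}" using pab by blast
    then show ?thesis using inA all by (intro bexI[of _ "{a, b}"] conjI)
  qed
qed

end


locale walkloc =
  fixes P :: "int set" and c d :: "int \<Rightarrow> int"
  assumes finP: "finite P"
    and P0: "0 \<notin> P"
    and Pneg: "\<And>x. x \<in> P \<Longrightarrow> - x \<in> P"
    and cP: "\<And>x. x \<in> P \<Longrightarrow> c x \<in> P" and dP: "\<And>x. x \<in> P \<Longrightarrow> d x \<in> P"
    and cinv: "\<And>x. x \<in> P \<Longrightarrow> c (c x) = x" and dinv: "\<And>x. x \<in> P \<Longrightarrow> d (d x) = x"
    and cfix: "\<And>x. x \<in> P \<Longrightarrow> c x \<noteq> x" and dfix: "\<And>x. x \<in> P \<Longrightarrow> d x \<noteq> x"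
    and cneg: "\<And>x. x \<in> P \<Longrightarrow> c (- x) = - c x" and dneg: "\<And>x. x \<in> P \<Longrightarrow> d (- x) = - d x"
    and cnoinv: "\<And>x. x \<in> P \<Longrightarrow> c x \<noteq> - x" and dnoinv: "\<And>x. x \<in> P \<Longrightarrow> d x \<noteq> - x"
begin

definition step :: "nat \<Rightarrow> int \<Rightarrow> int" where
  "step i x = (if even i then c x else d x)"

fun walk :: "int \<Rightarrow> nat \<Rightarrow> int" where
  "walk p 0 = p"
| "walk p (Suc i) = step i (walk p i)"

lemma stepP: "x \<in> P \<Longrightarrow> step i x \<in> P"
  unfolding step_def using cP dP by simp

lemma step_inv: "x \<in> P \<Longrightarrow> step i (step i x) = x"
  unfolding step_def using cinv dinv by simp

lemma step_fix: "x \<in> P \<Longrightarrow> step i x \<noteq> x"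
  unfolding step_def using cfix dfix by simp

lemma step_neg: "x \<in> P \<Longrightarrow> step i (- x) = - step i x"
  unfolding step_def using cneg dneg by simp

lemma step_noinv: "x \<in> P \<Longrightarrow> step i x \<noteq> - x"
  unfolding step_def using cnoinv dnoinv by simp

lemma step_par: "even i = even j \<Longrightarrow> step i = step j"
  unfolding step_def by (rule ext) simp

lemma walkP: "p \<in> P \<Longrightarrow> walk p i \<in> P"
  by (induction i) (simp_all add: stepP)

lemma walk_back: "p \<in> P \<Longrightarrow> walk p i = step i (walk p (Suc i))"
  using step_inv[OF walkP] by simp

lemma walk_fwd_shift:
  assumes p: "p \<in> P" and eq: "walk p a = walk p b" and par: "even a = even b"
  shows "walk p (a + t) = walk p (b + t)"
proof (induction t)
  case 0 then show ?case using eq by simp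
next
  case (Suc t)
  have "even (a + t) = even (b + t)" using par by simp
  then have "step (a + t) = step (b + t)" by (rule step_par)
  then show ?case using Suc by simp
qed

lemma walk_bwd_shift:
  assumes p: "p \<in> P" and eq: "walk p a = walk p b" and par: "even a = even b" and t: "t \<le> a" "t \<le> b"
  shows "walk p (a - t) = walk p (b - t)"
  using t
proof (induction t)
  case 0 then show ?case using eq by simp
next
  case (Suc t)
  have IH: "walk p (a - t) = walk p (b - t)" using Suc by simp
  have ea: "a - t = Suc (a - Suc t)" "b - t = Suc (b - Suc t)" using Suc.prems by auto
  have "even (a - Suc t) = even (b - Suc t)" using par Suc.prems by auto
  then have st: "step (a - Suc t) = step (b - Suc t)" by (rule step_par)
  have "walk p (a - Suc t) = step (a - Suc t) (walk p (a - t))" using walk_back[OF p, of "a - Suc t"] ea by simp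
  also have "\<dots> = step (b - Suc t) (walk p (b - t))" using IH st by simp
  also have "\<dots> = walk p (b - Suc t)" using walk_back[OF p, of "b - Suc t"] ea by simp
  finally show ?case .
qed

lemma walk_odd_diff:
  assumes p: "p \<in> P"
  shows "a < b \<Longrightarrow> odd (b - a) \<Longrightarrow> walk p a \<noteq> walk p b"
proof (induction "b - a" arbitrary: a b rule: less_induct)
  case less
  show ?case
  proof (cases "b = Suc a")
    case True
    have "step a (walk p a) \<noteq> walk p a" by (rule step_fix[OF walkP[OF p]])
    then show ?thesis using True by auto
  next
    case False
    then have ab: "Suc a < b - 1" "b - 1 = Suc (b - 1 - 1)" using less.prems by (auto simp: odd_pos) presburger+
    show ?thesis
    proof
      assume eq: "walk p a = walk p b"
      have bb: "b = Suc (b - 1)" using less.prems by simp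
      have "walk p (b - 1) = step (b - 1) (walk p b)" using walk_back[OF p, of "b - 1"] bb by simp
      moreover have "even (b - 1) = even a" using less.prems by (auto simp: odd_pos)
      ultimately have "walk p (b - 1) = step a (walk p a)" using eq step_par by metis
      then have e2: "walk p (Suc a) = walk p (b - 1)" by simp
      have "b - 1 - Suc a < b - a" "odd (b - 1 - Suc a)" using less.prems ab by auto
      then show False using less.hyps[of "b - 1" "Suc a"] ab(1) e2 by simp
    qed
  qed
qed

lemma walk_period_ex:
  assumes p: "p \<in> P"
  shows "\<exists>N>0. even N \<and> walk p N = p"
proof -
  have "\<not> inj (\<lambda>i. walk p (2 * i))"
  proof
    assume "inj (\<lambda>i. walk p (2 * i))"
    moreover have "range (\<lambda>i. walk p (2 * i)) \<subseteq> P" using walkP[OF p] by auto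
    then have "finite (range (\<lambda>i. walk p (2 * i)))" using finP finite_subset by blast
    ultimately have "finite (UNIV :: nat set)" using finite_imageD by blast
    then show False by simp
  qed
  then obtain i j where ij: "walk p (2 * i) = walk p (2 * j)" "i \<noteq> j" unfolding inj_def by blast
  have "\<exists>i j. i < j \<and> walk p (2 * i) = walk p (2 * j)"
  proof (cases "i < j")
    case True then show ?thesis using ij by blast
  next
    case False then have "j < i" using ij(2) by simp
    then show ?thesis using ij(1) by (intro exI[of _ j] exI[of _ i]) simp
  qed
  then obtain a b where ab: "a < b" "walk p (2 * a) = walk p (2 * b)" by blast
  have "walk p (2 * a - 2 * a) = walk p (2 * b - 2 * a)"
    by (rule walk_bwd_shift[OF p ab(2)]) (use ab(1) in auto)
  then have "walk p (2 * b - 2 * a) = p" by simp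
  moreover have "2 * b - 2 * a > 0" "even (2 * b - 2 * a)" using ab(1) by auto
  ultimately show ?thesis by blast
qed

lemma walk_periodic:
  assumes p: "p \<in> P" and N: "even N" "walk p N = p"
  shows "walk p (N + t) = walk p t"
  using walk_fwd_shift[OF p, of N 0 t] N by simp

lemma walk_periodic_mult:
  assumes p: "p \<in> P" and N: "even N" "walk p N = p"
  shows "walk p (N * q + t) = walk p t"
proof (induction q)
  case 0 then show ?case by simp
next
  case (Suc q)
  have "walk p (N * Suc q + t) = walk p (N + (N * q + t))" by (simp add: add.assoc)
  also have "\<dots> = walk p (N * q + t)" by (rule walk_periodic[OF p N])
  finally show ?case using Suc by simp
qed

lemma walk_mod:
  assumes p: "p \<in> P" and N: "even N" "walk p N = p"
  shows "walk p t = walk p (t mod N)"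
  using walk_periodic_mult[OF p N, of "t div N" "t mod N"] by simp

end


locale walkp = walkloc +
  fixes p :: int
  assumes pP: "p \<in> P" and mp: "- p \<in> range (walk p)"
begin

definition K :: nat where "K = (LEAST k. walk p k = - p)"

lemma K_prop: "walk p K = - p"
proof -
  obtain k where "walk p k = - p" using mp by auto
  then show ?thesis unfolding K_def by (rule LeastI)
qed

lemma K_min: "j < K \<Longrightarrow> walk p j \<noteq> - p"
  unfolding K_def using not_less_Least by blast

lemma p_nz: "p \<noteq> 0" using pP P0 by auto

lemma K_pos: "0 < K"
proof (rule ccontr)
  assume "\<not> 0 < K"
  then have "K = 0" by simp
  then have "p = - p" using K_prop by simp
  then show False using p_nz by simp
qed

lemma K_even: "even K"
proof (rule ccontr)
  assume odd: "odd K"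
  have refl: "walk p (K - i) = - walk p i" if "i \<le> K" for i
    using that
  proof (induction i)
    case 0 then show ?case using K_prop by simp
  next
    case (Suc i)
    have e: "K - i = Suc (K - Suc i)" using Suc.prems by simp
    have par: "even (K - Suc i) = even i" using odd Suc.prems by auto
    have "walk p (K - Suc i) = step (K - Suc i) (walk p (K - i))"
      using walk_back[OF pP, of "K - Suc i"] e by simp
    also have "\<dots> = step i (- walk p i)" using Suc step_par[OF par] by simp
    also have "\<dots> = - step i (walk p i)" using step_neg[OF walkP[OF pP]] by simp
    also have "\<dots> = - walk p (Suc i)" by simp
    finally show ?case .
  qed
  define h where "h = K div 2"
  have Kh: "K = Suc (2 * h)" using odd h_def by simp
  have "walk p (K - h) = - walk p h" by (rule refl) (use Kh in simp)
  moreover have "K - h = Suc h" using Kh by simp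
  ultimately have "walk p (Suc h) = - walk p h" by simp
  then have "step h (walk p h) = - walk p h" by simp
  then show False using step_noinv[OF walkP[OF pP]] by simp
qed

lemma neg_shift: "walk p (K + i) = - walk p i"
proof (induction i)
  case 0 then show ?case using K_prop by simp
next
  case (Suc i)
  have par: "even (K + i) = even i" using K_even by simp
  have "walk p (K + Suc i) = step (K + i) (walk p (K + i))" by simp
  also have "\<dots> = step i (- walk p i)" using Suc step_par[OF par] by simp
  also have "\<dots> = - walk p (Suc i)" using step_neg[OF walkP[OF pP]] by simp
  finally show ?case .
qed

lemma per2K: "walk p (2 * K) = p"
  using neg_shift[of K] K_prop by (simp add: mult_2)

lemma even2K: "even (2 * K)" by simp

lemma walk_mod2K: "walk p t = walk p (t mod (2 * K))"
  using walk_mod[OF pP even2K per2K] .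

lemma inj2K:
  assumes ab: "a < 2 * K" "b < 2 * K" "a \<noteq> b"
  shows "walk p a \<noteq> walk p b"
proof -
  have main: "walk p a \<noteq> walk p b" if ab: "a < b" "b < 2 * K" for a b
  proof
    assume eq: "walk p a = walk p b"
    show False
    proof (cases "even a = even b")
      case False
      then have "odd (b - a)" using ab by auto
      then show False using walk_odd_diff[OF pP ab(1)] eq by simp
    next
      case True
      have "walk p (a - a) = walk p (b - a)"
        by (rule walk_bwd_shift[OF pP eq True]) (use ab in auto)
      then have wt: "walk p (b - a) = p" by simp
      define t where "t = b - a"
      have t: "0 < t" "t < 2 * K" "even t" "walk p t = p" using ab True wt t_def by auto
      show False
      proof (cases "t \<le> K")
        case True
        have "walk p K = walk p (K mod t)" using walk_mod[OF pP t(3,4)] .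
        then have w: "walk p (K mod t) = - p" using K_prop by simp
        have "K mod t < K" using t(1) True by (meson order_less_le_trans mod_less_divisor)
        then show False using K_min w by blast
      next
        case False
        have "walk p (K + (t - K)) = - walk p (t - K)" by (rule neg_shift)
        then have "walk p (t - K) = - p" using t(4) False by simp
        moreover have "t - K < K" using t(2) False by simp
        ultimately show False using K_min by blast
      qed
    qed
  qed
  show ?thesis
  proof (cases "a < b")
    case True then show ?thesis using main ab by blast
  next
    case False then have "b < a" using ab(3) by simp
    then show ?thesis using main[of b a] ab by auto
  qed
qed

definition sg :: "int \<Rightarrow> bool" where "sg x = (0 < x)"
definition cr :: "nat \<Rightarrow> bool" where "cr i = (sg (walk p i) \<noteq> sg (walk p (Suc i)))"

lemma sg_neg: "x \<in> P \<Longrightarrow> sg (- x) = (\<not> sg x)"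
  unfolding sg_def using P0 by (cases "x = 0") auto

lemma cnt_parity: "odd (card {i. i < k \<and> cr i}) = (sg (walk p k) \<noteq> sg p)"
proof (induction k)
  case 0 then show ?case by simp
next
  case (Suc k)
  show ?case
  proof (cases "cr k")
    case True
    then have "{i. i < Suc k \<and> cr i} = insert k {i. i < k \<and> cr i}" by auto
    moreover have "k \<notin> {i. i < k \<and> cr i}" by simp
    ultimately have "card {i. i < Suc k \<and> cr i} = Suc (card {i. i < k \<and> cr i})" by simp
    then show ?thesis using Suc True unfolding cr_def by auto
  next
    case False
    then have "{i. i < Suc k \<and> cr i} = {i. i < k \<and> cr i}" using less_Suc_eq by auto
    then show ?thesis using Suc False unfolding cr_def by auto
  qed
qed

lemma cr_shift: "cr (K + i) = cr i"
proof -
  have b: "walk p (Suc (K + i)) = - walk p (Suc i)" using neg_shift[of "Suc i"] by (simp del: walk.simps)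
  have a: "walk p (K + i) = - walk p i" by (rule neg_shift)
  show ?thesis unfolding cr_def a b sg_neg[OF walkP[OF pP]] by simp
qed

lemma cnt_double: "card {i. i < 2 * K \<and> cr i} = 2 * card {i. i < K \<and> cr i}"
proof -
  let ?A = "{i. i < K \<and> cr i}"
  have "{i. i < 2 * K \<and> cr i} = ?A \<union> (\<lambda>i. K + i) ` ?A"
  proof (rule set_eqI, rule iffI)
    fix i assume i: "i \<in> {i. i < 2 * K \<and> cr i}"
    show "i \<in> ?A \<union> (\<lambda>i. K + i) ` ?A"
    proof (cases "i < K")
      case True then show ?thesis using i by simp
    next
      case False
      have ci: "cr i" "i < 2 * K" using i by auto
      have e: "K + (i - K) = i" using False by simp
      then have "cr (K + (i - K))" using ci by simp
      then have "cr (i - K)" by (metis cr_shift)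
      moreover have "i - K < K" using ci(2) False by simp
      ultimately have "i - K \<in> ?A" by simp
      then have "K + (i - K) \<in> (\<lambda>i. K + i) ` ?A" by (rule imageI)
      then show ?thesis using e by simp
    qed
  next
    fix i assume "i \<in> ?A \<union> (\<lambda>i. K + i) ` ?A"
    then show "i \<in> {i. i < 2 * K \<and> cr i}" using cr_shift by auto
  qed
  moreover have "?A \<inter> (\<lambda>i. K + i) ` ?A = {}" by auto
  moreover have "card ((\<lambda>i. K + i) ` ?A) = card ?A" by (rule card_image) (simp add: inj_on_def)
  moreover have "finite ?A" by simp
  ultimately show ?thesis by (simp add: card_Un_disjoint)
qed

definition f :: "nat \<Rightarrow> int set" where "f i = {walk p i, walk p (Suc i)}"

lemma f_inj:
  assumes ij: "i < 2 * K" "j < 2 * K" "even i = even j" "f i = f j"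
  shows "i = j"
proof (rule ccontr)
  assume ne: "i \<noteq> j"
  have "walk p i \<in> f i" unfolding f_def by blast
  then have "walk p i \<in> f j" using ij(4) by simp
  then have "walk p i = walk p j \<or> walk p i = walk p (Suc j)" unfolding f_def by blast
  then show False
  proof
    assume "walk p i = walk p j" then show False using inj2K[OF ij(1,2) ne] by simp
  next
    assume h: "walk p i = walk p (Suc j)"
    define j' where "j' = Suc j mod (2 * K)"
    have w: "walk p (Suc j) = walk p j'" using walk_mod2K j'_def by simp
    have j'lt: "j' < 2 * K" using K_pos j'_def by simp
    have "i \<noteq> j'"
    proof (cases "Suc j < 2 * K")
      case True then have "j' = Suc j" using j'_def by simp
      then show ?thesis using ij(3) by auto
    next
      case False then have "Suc j = 2 * K" using ij(2) by simp
      then have "j' = 0" "odd j" using j'_def by (simp, presburger)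
      then show ?thesis using ij(3) odd_pos by fastforce
    qed
    then show False using inj2K[OF ij(1) j'lt] h w by simp
  qed
qed

definition Ec :: "int set set" where "Ec = {{x, c x} | x. x \<in> range (walk p) \<and> sg x \<noteq> sg (c x)}"
definition Ed :: "int set set" where "Ed = {{x, d x} | x. x \<in> range (walk p) \<and> sg x \<noteq> sg (d x)}"

lemma walk_lt2K: "x \<in> range (walk p) \<Longrightarrow> \<exists>t<2 * K. x = walk p t"
proof -
  assume "x \<in> range (walk p)"
  then obtain t where "x = walk p t" by auto
  then have "x = walk p (t mod (2 * K))" using walk_mod2K by simp
  moreover have "t mod (2 * K) < 2 * K" using K_pos by simp
  ultimately show ?thesis by blast
qed

lemma Ec_eq: "Ec = f ` {i. i < 2 * K \<and> even i \<and> cr i}"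
proof (rule set_eqI, rule iffI)
  fix A assume "A \<in> Ec"
  then obtain x where x: "A = {x, c x}" "x \<in> range (walk p)" "sg x \<noteq> sg (c x)" unfolding Ec_def by blast
  obtain t where t: "t < 2 * K" "x = walk p t" using walk_lt2K[OF x(2)] by blast
  show "A \<in> f ` {i. i < 2 * K \<and> even i \<and> cr i}"
  proof (cases "even t")
    case True
    then have ws: "walk p (Suc t) = c x" using t(2) by (simp add: step_def)
    have "f t = A" "cr t" using x t(2) ws unfolding f_def cr_def by (simp_all del: walk.simps)
    then show ?thesis using t(1) True by blast
  next
    case False
    then have t0: "t = Suc (t - 1)" "even (t - 1)" by (simp_all add: odd_pos)
    have "walk p t = step (t - 1) (walk p (t - 1))" using t0(1) by (metis walk.simps(2))
    then have "x = c (walk p (t - 1))" using t(2) t0(2) by (simp add: step_def)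
    then have "c x = walk p (t - 1)" using cinv walkP[OF pP] by simp
    then have "f (t - 1) = A" "cr (t - 1)" using x t(2) t0(1) unfolding f_def cr_def
      by (metis insert_commute, metis)
    moreover have "t - 1 < 2 * K" using t(1) by simp
    ultimately show ?thesis using t0(2) by blast
  qed
next
  fix A assume "A \<in> f ` {i. i < 2 * K \<and> even i \<and> cr i}"
  then obtain i where i: "i < 2 * K" "even i" "cr i" "A = f i" by blast
  have ws: "walk p (Suc i) = c (walk p i)" using i(2) by (simp add: step_def)
  have "A = {walk p i, c (walk p i)}" "sg (walk p i) \<noteq> sg (c (walk p i))"
    using i(3,4) ws unfolding f_def cr_def by (simp_all del: walk.simps)
  then show "A \<in> Ec" unfolding Ec_def by blast
qed

lemma Ed_eq: "Ed = f ` {i. i < 2 * K \<and> odd i \<and> cr i}"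
proof (rule set_eqI, rule iffI)
  fix A assume "A \<in> Ed"
  then obtain x where x: "A = {x, d x}" "x \<in> range (walk p)" "sg x \<noteq> sg (d x)" unfolding Ed_def by blast
  obtain t0 where t0: "t0 < 2 * K" "x = walk p t0" using walk_lt2K[OF x(2)] by blast
  define t where "t = (if t0 = 0 then 2 * K else t0)"
  have t: "0 < t" "t \<le> 2 * K" "x = walk p t" using t0 K_pos per2K t_def by auto
  show "A \<in> f ` {i. i < 2 * K \<and> odd i \<and> cr i}"
  proof (cases "odd t")
    case True
    have "t \<noteq> 2 * K" using True by auto
    then have tl: "t < 2 * K" using t(2) by simp
    have ws: "walk p (Suc t) = d x" using True t(3) by (simp add: step_def)
    have "f t = A" "cr t" using x t(3) ws unfolding f_def cr_def by (simp_all del: walk.simps)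
    then show ?thesis using tl True by blast
  next
    case False
    have t1: "t = Suc (t - 1)" "odd (t - 1)" using t(1) False by (simp, presburger)
    have "walk p t = step (t - 1) (walk p (t - 1))" using t1(1) by (metis walk.simps(2))
    then have "x = d (walk p (t - 1))" using t(3) t1(2) by (simp add: step_def)
    then have "d x = walk p (t - 1)" using dinv walkP[OF pP] by simp
    then have "f (t - 1) = A" "cr (t - 1)" using x t(3) t1(1) unfolding f_def cr_def
      by (metis insert_commute, metis)
    moreover have "t - 1 < 2 * K" using t(1,2) by simp
    ultimately show ?thesis using t1(2) by blast
  qed
next
  fix A assume "A \<in> f ` {i. i < 2 * K \<and> odd i \<and> cr i}"
  then obtain i where i: "i < 2 * K" "odd i" "cr i" "A = f i" by blast
  have ws: "walk p (Suc i) = d (walk p i)" using i(2) by (simp add: step_def)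
  have "A = {walk p i, d (walk p i)}" "sg (walk p i) \<noteq> sg (d (walk p i))"
    using i(3,4) ws unfolding f_def cr_def by (simp_all del: walk.simps)
  then show "A \<in> Ed" unfolding Ed_def by blast
qed

theorem main_parity: "\<exists>m. card Ec + card Ed = 2 * m \<and> odd m"
proof -
  let ?E = "{i. i < 2 * K \<and> even i \<and> cr i}" and ?O = "{i. i < 2 * K \<and> odd i \<and> cr i}"
  have ie: "inj_on f ?E" by (rule inj_onI) (use f_inj in auto)
  have io: "inj_on f ?O" by (rule inj_onI) (use f_inj in auto)
  have "card Ec + card Ed = card ?E + card ?O"
    unfolding Ec_eq Ed_eq using card_image[OF ie] card_image[OF io] by simp
  also have "\<dots> = card (?E \<union> ?O)" by (rule card_Un_disjoint[symmetric]) auto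
  also have "?E \<union> ?O = {i. i < 2 * K \<and> cr i}" by auto
  also have "card \<dots> = 2 * card {i. i < K \<and> cr i}" by (rule cnt_double)
  finally have e: "card Ec + card Ed = 2 * card {i. i < K \<and> cr i}" .
  have "odd (card {i. i < K \<and> cr i})" using cnt_parity[of K] K_prop sg_neg[OF pP] by simp
  then show ?thesis using e by blast
qed

end


context walkloc
begin

lemma walk_closed:
  assumes p: "p \<in> P" and x: "x \<in> range (walk p)"
  shows "c x \<in> range (walk p)" "d x \<in> range (walk p)"
proof -
  obtain N where N: "N > 0" "even N" "walk p N = p" using walk_period_ex[OF p] by blast
  obtain t where t: "x = walk p t" using x by auto
  have xt: "x = walk p (N + t)" using walk_periodic[OF p N(2,3)] t by simp
  have b: "walk p (N + t) = step (N + t - 1) (walk p (N + t - 1))"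
    using N(1) by (metis Suc_pred' add_gr_0 walk.simps(2))
  show "c x \<in> range (walk p)"
  proof (cases "even (N + t)")
    case True
    have "walk p (Suc (N + t)) = c x" using True xt by (simp add: step_def)
    then show ?thesis by (metis rangeI)
  next
    case False
    then have "even (N + t - 1)" using N(1) by presburger
    have sc: "\<And>i y. even i \<Longrightarrow> step i y = c y" by (simp add: step_def)
    have "x = step (N + t - 1) (walk p (N + t - 1))" using b xt by simp
    also have "\<dots> = c (walk p (N + t - 1))" by (rule sc) fact
    finally have "x = c (walk p (N + t - 1))" .
    then have "c x = walk p (N + t - 1)" using cinv walkP[OF p] by simp
    then show ?thesis by (metis rangeI)
  qed
  show "d x \<in> range (walk p)"
  proof (cases "odd (N + t)")
    case True
    have "walk p (Suc (N + t)) = d x" using True xt by (simp add: step_def)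
    then show ?thesis by (metis rangeI)
  next
    case False
    then have "odd (N + t - 1)" using N(1) by presburger
    have sd: "\<And>i y. odd i \<Longrightarrow> step i y = d y" by (simp add: step_def)
    have "x = step (N + t - 1) (walk p (N + t - 1))" using b xt by simp
    also have "\<dots> = d (walk p (N + t - 1))" by (rule sd) fact
    finally have "x = d (walk p (N + t - 1))" .
    then have "d x = walk p (N + t - 1)" using dinv walkP[OF p] by simp
    then show ?thesis by (metis rangeI)
  qed
qed

end

context walkp
begin

lemma range_neg: "x \<in> range (walk p) \<Longrightarrow> - x \<in> range (walk p)"
proof -
  assume "x \<in> range (walk p)"
  then obtain t where "x = walk p t" by auto
  then have "- x = walk p (K + t)" using neg_shift by simp
  then show ?thesis by (metis rangeI)
qed

end

context cupw
begin

lemma arcs_sub: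
  assumes A: "A \<in> cup_arcs n w" and x: "x \<in> A"
  shows "x \<in> P"
proof -
  have "\<forall>A\<in>cup_arcs n w. \<exists>x y. A = {x, y} \<and> x \<noteq> y \<and> x \<in> P \<and> y \<in> P"
    using arcs_pm unfolding pm_def by (elim conjE)
  then have "\<exists>x y. A = {x, y} \<and> x \<noteq> y \<and> x \<in> P \<and> y \<in> P" using A by (rule bspec)
  then obtain a b where ab: "A = {a, b}" "a \<in> P" "b \<in> P" by (elim exE conjE) (intro that)
  have "x = a \<or> x = b" using x ab(1) by simp
  then show ?thesis using ab(2,3) by (elim disjE) simp_all
qed

lemma adj_partner:
  assumes "{x, y} \<in> cup_arcs n w"
  shows "x \<in> P" "y = partner (cup_arcs n w) x"
proof -
  show xP: "x \<in> P" using arcs_sub[OF assms] by simp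
  note pp = partner_props[OF arcs_pm xP]
  have e: "{x, y} = {x, partner (cup_arcs n w) x}" using pp(4)[OF assms] by simp
  show "y = partner (cup_arcs n w) x"
  proof (rule ccontr)
    assume ne: "y \<noteq> partner (cup_arcs n w) x"
    have "y \<in> {x, y}" by simp
    then have "y \<in> {x, partner (cup_arcs n w) x}" by (simp only: e)
    then have "y = x" using ne by simp
    then have "{x} = {x, partner (cup_arcs n w) x}" using e by simp
    then show False using pp(2) by (simp add: insert_commute)
  qed
qed

lemma count_linked:
  assumes Zneg: "\<And>x. x \<in> Z \<Longrightarrow> - x \<in> Z"
  shows "card {A \<in> cup_arcs n w. A \<subseteq> Z \<and> crossing A} = 2 * card {L \<in> cup_linked n w. meets Z L}"
proof -
  let ?C = "{L \<in> cup_linked n w. meets Z L}"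
  have eq: "{A \<in> cup_arcs n w. A \<subseteq> Z \<and> crossing A} = \<Union>?C"
  proof (rule set_eqI, rule iffI)
    fix A assume "A \<in> {A \<in> cup_arcs n w. A \<subseteq> Z \<and> crossing A}"
    then have A: "A \<in> cup_arcs n w" "A \<subseteq> Z" "crossing A" by auto
    obtain j where j: "j < k" "A = T2 j \<or> A = T3 j" using arcs_crossing[OF A(1,3)] by blast
    have L: "{T2 j, T3 j} \<in> cup_linked n w" unfolding cup_linked_eq using j(1) by blast
    have AL: "A \<in> {T2 j, T3 j}" using j(2) by blast
    then have "meets Z {T2 j, T3 j}" unfolding meets_def using A(2) by blast
    then have "{T2 j, T3 j} \<in> ?C" using L by simp
    then show "A \<in> \<Union>?C" using AL by (rule UnionI)
  next
    fix A assume "A \<in> \<Union>?C"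
    then obtain L where L: "L \<in> cup_linked n w" "meets Z L" "A \<in> L" by blast
    obtain j where j: "j < k" "L = {T2 j, T3 j}" using L(1) unfolding cup_linked_eq by blast
    obtain A' where A': "A' \<in> L" "A' \<subseteq> Z" using L(2) unfolding meets_def by blast
    have negsub: "uminus ` B \<subseteq> Z" if "B \<subseteq> Z" for B using that Zneg by blast
    have T3n: "uminus ` T3 j = T2 j" unfolding T2_def T3_def by auto
    have both: "T2 j \<subseteq> Z" "T3 j \<subseteq> Z"
    proof -
      have "A' \<in> {T2 j, T3 j}" using A'(1) j(2) by simp
      then have "A' = T2 j \<or> A' = T3 j" by simp
      then have "T2 j \<subseteq> Z \<and> T3 j \<subseteq> Z"
      proof (elim disjE)
        assume "A' = T2 j"
        then have t2: "T2 j \<subseteq> Z" using A'(2) by simp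
        then show "T2 j \<subseteq> Z \<and> T3 j \<subseteq> Z" using negsub[OF t2] T2_neg[of j] by simp
      next
        assume "A' = T3 j"
        then have t3: "T3 j \<subseteq> Z" using A'(2) by simp
        then show "T2 j \<subseteq> Z \<and> T3 j \<subseteq> Z" using negsub[OF t3] T3n by simp
      qed
      then show "T2 j \<subseteq> Z" "T3 j \<subseteq> Z" by simp_all
    qed
    have "A \<in> {T2 j, T3 j}" using L(3) j(2) by simp
    then have "A = T2 j \<or> A = T3 j" by simp
    then show "A \<in> {A \<in> cup_arcs n w. A \<subseteq> Z \<and> crossing A}"
    proof (elim disjE)
      assume "A = T2 j" then show ?thesis using both T_in_arcs[OF j(1)] T_crossing[OF j(1)] by simp
    next
      assume "A = T3 j" then show ?thesis using both T_in_arcs[OF j(1)] T_crossing[OF j(1)] by simp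
    qed
  qed
  have finC: "finite ?C" unfolding cup_linked_eq by simp
  have card2: "card L = 2" if LC: "L \<in> ?C" for L
  proof -
    have "L \<in> cup_linked n w" using LC by simp
    then obtain j where j: "j < k" "L = {T2 j, T3 j}" unfolding cup_linked_eq by blast
    then show ?thesis using T_distinct(1)[OF j(1) j(1)] by simp
  qed
  have disj: "pairwise disjnt ?C"
    unfolding pairwise_def disjnt_def
  proof (intro ballI impI)
    fix L1 L2 assume L1: "L1 \<in> ?C" and L2: "L2 \<in> ?C" and ne: "L1 \<noteq> L2"
    obtain j where j: "j < k" "L1 = {T2 j, T3 j}" using L1 unfolding cup_linked_eq by blast
    obtain j' where j': "j' < k" "L2 = {T2 j', T3 j'}" using L2 unfolding cup_linked_eq by blast
    have "j \<noteq> j'"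
    proof
      assume "j = j'"
      then have "L1 = L2" using j(2) j'(2) by simp
      with ne show False by simp
    qed
    then have neqs: "T2 j \<noteq> T2 j'" "T3 j \<noteq> T3 j'" "T2 j \<noteq> T3 j'" "T3 j \<noteq> T2 j'"
      using T_distinct[OF j(1) j'(1)] T_distinct(1)[OF j'(1) j(1)] by auto
    show "L1 \<inter> L2 = {}" unfolding j(2) j'(2) using neqs by auto
  qed
  have finL: "finite L" if LC: "L \<in> ?C" for L
  proof -
    have "card L = 2" using card2[OF LC] .
    then have "0 < card L" by simp
    then show ?thesis by (rule card_ge_0_finite)
  qed
  have "card (\<Union>?C) = sum card ?C" by (rule card_Union_disjoint[OF disj finL])
  also have "\<dots> = sum (\<lambda>L. 2) ?C" by (rule sum.cong) (simp_all add: card2)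
  also have "\<dots> = 2 * card ?C" by simp
  finally show ?thesis using eq by simp
qed

end


lemma Ec_char:
  assumes pm: "pm P S" and Zc: "\<And>x. x \<in> Z \<Longrightarrow> partner S x \<in> Z" and ZP: "Z \<subseteq> P" and P0: "0 \<notin> P"
  shows "{{x, partner S x} | x. x \<in> Z \<and> (0 < x) \<noteq> (0 < partner S x)} = {A \<in> S. A \<subseteq> Z \<and> crossing A}"
proof (rule set_eqI, rule iffI)
  fix A assume "A \<in> {{x, partner S x} | x. x \<in> Z \<and> (0 < x) \<noteq> (0 < partner S x)}"
  then obtain x where x: "A = {x, partner S x}" "x \<in> Z" "(0 < x) \<noteq> (0 < partner S x)" by blast
  have xP: "x \<in> P" using x(2) ZP by blast
  have inS: "A \<in> S" using partner_props(1)[OF pm xP] x(1) by simp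
  have sub: "A \<subseteq> Z" using x(1,2) Zc[OF x(2)] by simp
  have nz: "x \<noteq> 0" "partner S x \<noteq> 0" using xP partner_props(3)[OF pm xP] P0 by auto
  have "crossing A"
  proof (cases "0 < x")
    case True
    then have "partner S x < 0" using x(3) nz by simp
    then show ?thesis unfolding crossing_def x(1) using True by blast
  next
    case False
    then have "x < 0" "0 < partner S x" using x(3) nz by auto
    then show ?thesis unfolding crossing_def x(1) by blast
  qed
  then show "A \<in> {A \<in> S. A \<subseteq> Z \<and> crossing A}" using inS sub by simp
next
  fix A assume "A \<in> {A \<in> S. A \<subseteq> Z \<and> crossing A}"
  then have A: "A \<in> S" "A \<subseteq> Z" "crossing A" by auto
  obtain a b where ab: "a \<in> A" "b \<in> A" "a < 0" "0 < b" using A(3) unfolding crossing_def by blast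
  have aZ: "a \<in> Z" using ab(1) A(2) by blast
  have aP: "a \<in> P" using aZ ZP by blast
  have Aeq: "A = {a, partner S a}" using partner_props(4)[OF pm aP A(1) ab(1)] .
  have "b \<in> {a, partner S a}" using ab(2) Aeq by simp
  then have "b = partner S a" using ab(3,4) by auto
  then have "(0 < a) \<noteq> (0 < partner S a)" using ab(3,4) by simp
  then show "A \<in> {{x, partner S x} | x. x \<in> Z \<and> (0 < x) \<noteq> (0 < partner S x)}"
    using Aeq aZ by blast
qed

theorem corollary3p8:
  fixes n :: nat and w w' :: "int \<Rightarrow> int" and Z :: "int set"
  assumes "4 \<le> n"
    and "w \<in> minreps n" and "w' \<in> minreps n"
    and "Z \<in> circles n w w'"
    and "self_intersecting n w w' Z"
  shows "is_red n w w' Z"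
proof -
  have w: "w \<in> weylD n" using assms(2) unfolding minreps_def by simp
  have w': "w' \<in> weylD n" using assms(3) unfolding minreps_def by simp
  interpret W1: cupw n w by unfold_locales (rule w)
  interpret W2: cupw n w' by unfold_locales (rule w')
  define S1 where "S1 = cup_arcs n w"
  define S2 where "S2 = cup_arcs n w'"
  define c where "c = partner S1"
  define d where "d = partner S2"
  have pm1: "pm (points n) S1" unfolding S1_def by (rule W1.arcs_pm)
  have pm2: "pm (points n) S2" unfolding S2_def by (rule W2.arcs_pm)
  have P0: "0 \<notin> points n" using points_nz by blast
  interpret WL: walkloc "points n" c d
  proof (unfold_locales)
    show "finite (points n)" by (rule points_fin)
    show "0 \<notin> points n" by (rule P0)
    show "\<And>x. x \<in> points n \<Longrightarrow> - x \<in> points n" by (rule points_neg)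
    show "\<And>x. x \<in> points n \<Longrightarrow> c x \<in> points n" unfolding c_def by (rule partner_props(3)[OF pm1])
    show "\<And>x. x \<in> points n \<Longrightarrow> d x \<in> points n" unfolding d_def by (rule partner_props(3)[OF pm2])
    show "\<And>x. x \<in> points n \<Longrightarrow> c (c x) = x" unfolding c_def by (rule partner_inv[OF pm1])
    show "\<And>x. x \<in> points n \<Longrightarrow> d (d x) = x" unfolding d_def by (rule partner_inv[OF pm2])
    show "\<And>x. x \<in> points n \<Longrightarrow> c x \<noteq> x" unfolding c_def by (rule partner_props(2)[OF pm1])
    show "\<And>x. x \<in> points n \<Longrightarrow> d x \<noteq> x" unfolding d_def by (rule partner_props(2)[OF pm2])
    show "\<And>x. x \<in> points n \<Longrightarrow> c (- x) = - c x" unfolding c_def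
      by (rule partner_neg[OF pm1 _ points_neg]) (auto simp: S1_def intro: W1.arcs_sym)
    show "\<And>x. x \<in> points n \<Longrightarrow> d (- x) = - d x" unfolding d_def
      by (rule partner_neg[OF pm2 _ points_neg]) (auto simp: S2_def intro: W2.arcs_sym)
    show "\<And>x. x \<in> points n \<Longrightarrow> c x \<noteq> - x"
    proof
      fix x assume x: "x \<in> points n" and e: "c x = - x"
      have A: "{x, c x} \<in> cup_arcs n w" using partner_props(1)[OF pm1 x] unfolding c_def S1_def by simp
      show False by (rule W1.arcs_noinv[OF A, of x]) (use e in simp_all)
    qed
    show "\<And>x. x \<in> points n \<Longrightarrow> d x \<noteq> - x"
    proof
      fix x assume x: "x \<in> points n" and e: "d x = - x"
      have A: "{x, d x} \<in> cup_arcs n w'" using partner_props(1)[OF pm2 x] unfolding d_def S2_def by simp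
      show False by (rule W2.arcs_noinv[OF A, of x]) (use e in simp_all)
    qed
  qed
  obtain p where pP: "p \<in> points n" and pZ: "p \<in> Z" and mpZ: "- p \<in> Z"
  proof -
    obtain L where L: "L \<in> cup_linked n w \<union> cup_linked n w'" "\<And>A. A \<in> L \<Longrightarrow> A \<subseteq> Z"
      using assms(5) unfolding self_intersecting_def by blast
    from L(1) show ?thesis
    proof
      assume "L \<in> cup_linked n w"
      then obtain j where j: "j < W1.k" "L = {W1.T2 j, W1.T3 j}" unfolding W1.cup_linked_eq by blast
      have s: "W1.T2 j \<subseteq> Z" "W1.T3 j \<subseteq> Z" using L(2) j(2) by simp_all
      note yp = W1.Y_props[OF W1.T_pos_elems(1)[OF j(1)]]
      have "cross_list n w ! (2 * j) \<in> Z" using s(1) unfolding W1.T2_def by simp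
      moreover have "- (cross_list n w ! (2 * j)) \<in> Z" using s(2) unfolding W1.T3_def by simp
      ultimately show ?thesis using that yp(3) by blast
    next
      assume "L \<in> cup_linked n w'"
      then obtain j where j: "j < W2.k" "L = {W2.T2 j, W2.T3 j}" unfolding W2.cup_linked_eq by blast
      have s: "W2.T2 j \<subseteq> Z" "W2.T3 j \<subseteq> Z" using L(2) j(2) by simp_all
      note yp = W2.Y_props[OF W2.T_pos_elems(1)[OF j(1)]]
      have "cross_list n w' ! (2 * j) \<in> Z" using s(1) unfolding W2.T2_def by simp
      moreover have "- (cross_list n w' ! (2 * j)) \<in> Z" using s(2) unfolding W2.T3_def by simp
      ultimately show ?thesis using that yp(3) by blast
    qed
  qed
  define R where "R = circ_adj n w w'"
  have Rsym: "sym R" unfolding sym_def R_def circ_adj_def by (simp add: insert_commute)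
  obtain q where q: "Z = R\<^sup>* `` {q}" using assms(4) unfolding circles_def R_def by blast
  have Zp: "Z = R\<^sup>* `` {p}"
  proof -
    have qp: "(q, p) \<in> R\<^sup>*" using pZ q by simp
    have pq: "(p, q) \<in> R\<^sup>*" using qp sym_rtrancl[OF Rsym] unfolding sym_def by blast
    show ?thesis unfolding q using qp pq by (meson Image_singleton_iff rtrancl_trans subsetI subset_antisym)
  qed
  have Rstep: "z = c y \<or> z = d y" if "(y, z) \<in> R" for y z
  proof -
    have "{y, z} \<in> S1 \<or> {y, z} \<in> S2" using that unfolding R_def circ_adj_def S1_def S2_def by simp
    then show ?thesis
    proof
      assume "{y, z} \<in> S1" then show ?thesis unfolding c_def S1_def using W1.adj_partner(2) by (simp add: S1_def)
    next
      assume "{y, z} \<in> S2" then show ?thesis unfolding d_def S2_def using W2.adj_partner(2) by (simp add: S2_def)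
    qed
  qed
  have cR: "(x, c x) \<in> R" if "x \<in> points n" for x
    using partner_props(1)[OF pm1 that] unfolding R_def circ_adj_def c_def S1_def by simp
  have dR: "(x, d x) \<in> R" if "x \<in> points n" for x
    using partner_props(1)[OF pm2 that] unfolding R_def circ_adj_def d_def S2_def by simp
  have Zw: "Z = range (WL.walk p)"
  proof
    show "Z \<subseteq> range (WL.walk p)"
    proof
      fix z assume "z \<in> Z"
      then have "(p, z) \<in> R\<^sup>*" using Zp by simp
      then show "z \<in> range (WL.walk p)"
      proof (induction rule: rtrancl_induct)
        case base then show ?case by (metis WL.walk.simps(1) rangeI)
      next
        case (step y z)
        then show ?case using Rstep[OF step(2)] WL.walk_closed[OF pP step(3)] by auto
      qed
    qed
    show "range (WL.walk p) \<subseteq> Z"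
    proof
      fix z assume "z \<in> range (WL.walk p)"
      then obtain i where zi: "z = WL.walk p i" by auto
      have "(p, WL.walk p i) \<in> R\<^sup>*"
      proof (induction i)
        case 0 then show ?case by simp
      next
        case (Suc i)
        have wP: "WL.walk p i \<in> points n" using WL.walkP[OF pP] .
        have "(WL.walk p i, WL.walk p (Suc i)) \<in> R"
          using cR[OF wP] dR[OF wP] by (simp add: WL.step_def)
        then show ?case using Suc by (rule rtrancl_into_rtrancl[rotated])
      qed
      then show "z \<in> Z" using Zp zi by simp
    qed
  qed
  interpret WP: walkp "points n" c d p
    by unfold_locales (use pP mpZ Zw in auto)
  obtain m where m: "card WP.Ec + card WP.Ed = 2 * m" "odd m" using WP.main_parity by blast
  have Zneg: "\<And>x. x \<in> Z \<Longrightarrow> - x \<in> Z" using WP.range_neg Zw by simp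
  have ZP: "Z \<subseteq> points n" using Zw WL.walkP[OF pP] by auto
  have Zc: "\<And>x. x \<in> Z \<Longrightarrow> partner S1 x \<in> Z" using WL.walk_closed(1)[OF pP] Zw c_def by simp
  have Zd: "\<And>x. x \<in> Z \<Longrightarrow> partner S2 x \<in> Z" using WL.walk_closed(2)[OF pP] Zw d_def by simp
  have Ec: "WP.Ec = {A \<in> S1. A \<subseteq> Z \<and> crossing A}"
    unfolding WP.Ec_def WP.sg_def Zw[symmetric] unfolding c_def by (rule Ec_char[OF pm1 Zc ZP P0])
  have Ed: "WP.Ed = {A \<in> S2. A \<subseteq> Z \<and> crossing A}"
    unfolding WP.Ed_def WP.sg_def Zw[symmetric] unfolding d_def by (rule Ec_char[OF pm2 Zd ZP P0])
  have c1: "card WP.Ec = 2 * card {L \<in> cup_linked n w. meets Z L}"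
    unfolding Ec S1_def by (rule W1.count_linked[OF Zneg])
  have c2: "card WP.Ed = 2 * card {L \<in> cup_linked n w'. meets Z L}"
    unfolding Ed S2_def by (rule W2.count_linked[OF Zneg])
  have "n_linked_met n w w' Z = m" unfolding n_linked_met_def using m(1) c1 c2 by simp
  then show ?thesis unfolding is_red_def using m(2) by simp
qed

end
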